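(* Let $V$ be a finite-dimensional real vector space with skew-symmetric bilinear forms $A$ and $B$, $B$ non-degenerate, such that the Jordan–Kronecker decomposition of $(V, A, B)$ consists only of real Jordan blocks with the same complex eigenvalue $\lambda = \alpha + i\beta$, $\beta \neq 0$. Let $J$ be the semisimple part of $\frac{P - \alpha E}{\beta}$, where $P = B^{-1}A$. Then every automorphism $Q \in \mathrm{Aut}(V, A, B)$ commutes with $J$: $QJ = JQ$. Consequently there is a natural one-to-one correspondence $\mathrm{Aut}(V, A, B) \cong \mathrm{Aut}(V^{\mathbb{C}}, A^{\mathbb{C}}, B^{\mathbb{C}})$. Moreover, a subspace $U \subset V$ is invariant (under $\mathrm{Aut}(V,A,B)$) if and only if $U$ is $J$-invariant and the corresponding complex subspace $U^{\mathbb{C}}$ of $(V^{\mathbb{C}}, A^{\mathbb{C}}, B^{\mathbb{C}})$ is invariant (under $\mathrm{Aut}(V^{\mathbb{C}}, A^{\mathbb{C}}, B^{\mathbb{C}})$).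
   Context: $P = B^{-1}A$ means $A(u,v) = B(Pu,v)$. $J$ satisfies $J^2 = -E$ and is self-adjoint with respect to $A$ and $B$. $V^{\mathbb{C}}$ denotes $V$ regarded as a complex vector space via the complex structure $J$ (i.e. $i \cdot v := Jv$), and $A^{\mathbb{C}}(u,v) = A(u,v) - iA(u,Jv)$, $B^{\mathbb{C}}(u,v) = B(u,v) - iB(u,Jv)$ are complex bilinear forms on it. For a $J$-invariant real subspace $U$, $U^{\mathbb{C}}$ is $U$ regarded as a complex subspace of $V^{\mathbb{C}}$. $\mathrm{Aut}(V,A,B)$ (resp. $\mathrm{Aut}(V^{\mathbb{C}}, A^{\mathbb{C}}, B^{\mathbb{C}})$) is the group of real (resp. complex) linear automorphisms preserving both forms; a subspace is invariant if it is preserved by the corresponding group. A real Jordan block with eigenvalue $\alpha + i\beta$ of size $k$ is a $4k$-dimensional summand with basis in which $B = \begin{pmatrix}0 & \mathrm{diag}(E_2,\dots,E_2)\\ -\mathrm{diag}(E_2,\dots,E_2) & 0\end{pmatrix}$ and $A = \begin{pmatrix}0 & \mathcal{J}\\ -\mathcal{J}^T & 0\end{pmatrix}$, where $\mathcal{J}$ is the $k\times k$ block upper-bidiagonal matrix with diagonal blocks $\Lambda = \begin{pmatrix}\alpha & -\beta\\ \beta & \alpha\end{pmatrix}$ and superdiagonal blocks $E_2$ (the $2\times 2$ identity). *)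

theory Defs
  imports "HOL-Analysis.Analysis" "HOL-Computational_Algebra.Polynomial"
begin

text \<open>Entries of the 2k x 2k block upper-bidiagonal matrix with diagonal
  blocks Lambda = [[alpha,-beta],[beta,alpha]] and superdiagonal blocks E2.\<close>
definition jk_J :: "real \<Rightarrow> real \<Rightarrow> nat \<Rightarrow> nat \<Rightarrow> real" where
  "jk_J \<alpha> \<beta> p q =
     (let a = p div 2; c = q div 2; r = p mod 2; s = q mod 2 in
      if a = c then
        (if r = 0 \<and> s = 0 then \<alpha> else if r = 0 \<and> s = 1 then - \<beta>
         else if r = 1 \<and> s = 0 then \<beta> else \<alpha>)
      else if c = a + 1 then (if r = s then 1 else 0)
      else 0)"

text \<open>Gram matrix of B on a real Jordan block of size k (dimension 4k):
  [[0, I_2k], [-I_2k, 0]].\<close>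
definition jblock_B :: "nat \<Rightarrow> nat \<Rightarrow> nat \<Rightarrow> real" where
  "jblock_B k i j =
     (let m = 2 * k in
      if i < m \<and> m \<le> j then (if j - m = i then 1 else 0)
      else if m \<le> i \<and> j < m then - (if i - m = j then 1 else 0)
      else 0)"

text \<open>Gram matrix of A on a real Jordan block of size k: [[0, JJ], [-JJ^T, 0]].\<close>
definition jblock_A :: "real \<Rightarrow> real \<Rightarrow> nat \<Rightarrow> nat \<Rightarrow> nat \<Rightarrow> real" where
  "jblock_A \<alpha> \<beta> k i j =
     (let m = 2 * k in
      if i < m \<and> m \<le> j then jk_J \<alpha> \<beta> i (j - m)
      else if m \<le> i \<and> j < m then - jk_J \<alpha> \<beta> j (i - m)
      else 0)"

fun blockdiag :: "(nat \<Rightarrow> nat \<Rightarrow> nat \<Rightarrow> real) \<Rightarrow> nat list \<Rightarrow> nat \<Rightarrow> nat \<Rightarrow> real" where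
  "blockdiag M [] i j = 0"
| "blockdiag M (k # ks) i j =
     (if i < 4 * k \<and> j < 4 * k then M k i j
      else if 4 * k \<le> i \<and> 4 * k \<le> j then blockdiag M ks (i - 4 * k) (j - 4 * k)
      else 0)"

text \<open>The Jordan--Kronecker decomposition of (V,A,B) consists only of real Jordan
  blocks with eigenvalue alpha + i beta: there is a basis e_0,...,e_{N-1} of V
  in which the Gram matrices of A and B are block-diagonal sums of such blocks.\<close>
definition only_real_jordan_blocks ::
  "('v::real_vector \<Rightarrow> 'v \<Rightarrow> real) \<Rightarrow> ('v \<Rightarrow> 'v \<Rightarrow> real) \<Rightarrow> real \<Rightarrow> real \<Rightarrow> bool" where
  "only_real_jordan_blocks A B \<alpha> \<beta> \<longleftrightarrow>
     (\<exists>ks (e :: nat \<Rightarrow> 'v).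
        (\<forall>k\<in>set ks. 0 < k) \<and>
        (let N = 4 * sum_list ks in
           inj_on e {..<N} \<and> independent (e ` {..<N}) \<and> span (e ` {..<N}) = UNIV \<and>
           (\<forall>i<N. \<forall>j<N. A (e i) (e j) = blockdiag (jblock_A \<alpha> \<beta>) ks i j \<and>
                         B (e i) (e j) = blockdiag jblock_B ks i j)))"

definition poly_op :: "real poly \<Rightarrow> ('v::real_vector \<Rightarrow> 'v) \<Rightarrow> 'v \<Rightarrow> 'v" where
  "poly_op p f x = (\<Sum>i\<le>degree p. coeff p i *\<^sub>R (f ^^ i) x)"

text \<open>A real linear operator is semisimple iff it is annihilated by a nonzero
  real polynomial all of whose complex roots are simple (i.e. it is
  diagonalizable over the complex numbers).\<close>
definition semisimple_op :: "('v::real_vector \<Rightarrow> 'v) \<Rightarrow> bool" where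
  "semisimple_op S \<longleftrightarrow>
     (\<exists>p :: real poly. p \<noteq> 0 \<and> (\<forall>x. poly_op p S x = 0) \<and>
        (\<forall>z :: complex. poly (map_poly of_real p) z = 0 \<longrightarrow>
                        poly (pderiv (map_poly of_real p)) z \<noteq> 0))"

definition nilpotent_op :: "('v::real_vector \<Rightarrow> 'v) \<Rightarrow> bool" where
  "nilpotent_op N \<longleftrightarrow> (\<exists>k. \<forall>x. (N ^^ k) x = 0)"

text \<open>S is the semisimple part of M: M = S + N with S semisimple, N nilpotent,
  both linear and commuting (this decomposition is unique).\<close>
definition is_semisimple_part :: "('v::real_vector \<Rightarrow> 'v) \<Rightarrow> ('v \<Rightarrow> 'v) \<Rightarrow> bool" where
  "is_semisimple_part S M \<longleftrightarrow>
     (\<exists>N. linear S \<and> linear N \<and> semisimple_op S \<and> nilpotent_op N \<and>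
          S \<circ> N = N \<circ> S \<and> (\<forall>x. M x = S x + N x))"

definition aut_real :: "('v::real_vector \<Rightarrow> 'v \<Rightarrow> real) \<Rightarrow> ('v \<Rightarrow> 'v \<Rightarrow> real) \<Rightarrow> ('v \<Rightarrow> 'v) set" where
  "aut_real A B = {Q. linear Q \<and> bij Q \<and>
     (\<forall>u v. A (Q u) (Q v) = A u v) \<and> (\<forall>u v. B (Q u) (Q v) = B u v)}"

text \<open>V regarded as a complex vector space via J: (a + ib) v = a v + b J v.\<close>
definition cscale :: "('v::real_vector \<Rightarrow> 'v) \<Rightarrow> complex \<Rightarrow> 'v \<Rightarrow> 'v" where
  "cscale J c v = Re c *\<^sub>R v + Im c *\<^sub>R J v"

definition complex_linear_J :: "('v::real_vector \<Rightarrow> 'v) \<Rightarrow> ('v \<Rightarrow> 'v) \<Rightarrow> bool" where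
  "complex_linear_J J Q \<longleftrightarrow>
     (\<forall>u v. Q (u + v) = Q u + Q v) \<and> (\<forall>c v. Q (cscale J c v) = cscale J c (Q v))"

definition cform :: "('v \<Rightarrow> 'v) \<Rightarrow> ('v \<Rightarrow> 'v \<Rightarrow> real) \<Rightarrow> 'v \<Rightarrow> 'v \<Rightarrow> complex" where
  "cform J F u v = Complex (F u v) (- F u (J v))"

definition aut_complex ::
  "('v::real_vector \<Rightarrow> 'v) \<Rightarrow> ('v \<Rightarrow> 'v \<Rightarrow> real) \<Rightarrow> ('v \<Rightarrow> 'v \<Rightarrow> real) \<Rightarrow> ('v \<Rightarrow> 'v) set" where
  "aut_complex J A B = {Q. complex_linear_J J Q \<and> bij Q \<and>
     (\<forall>u v. cform J A (Q u) (Q v) = cform J A u v) \<and>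
     (\<forall>u v. cform J B (Q u) (Q v) = cform J B u v)}"

definition invariant_under :: "('v \<Rightarrow> 'v) set \<Rightarrow> 'v set \<Rightarrow> bool" where
  "invariant_under G U \<longleftrightarrow> (\<forall>Q\<in>G. Q ` U \<subseteq> U)"

end

theory Submission
  imports Defs "HOL-Computational_Algebra.Polynomial_Factorial"
    "HOL-Computational_Algebra.Euclidean_Algorithm" "HOL-Computational_Algebra.Field_as_Ring"
begin


lemma lin_add: "linear f \<Longrightarrow> linear g \<Longrightarrow> linear (\<lambda>x. f x + g x)"
  by (auto simp: linear_iff algebra_simps)
lemma lin_neg: "linear f \<Longrightarrow> linear (\<lambda>x. - f x)"
  by (auto simp: linear_iff algebra_simps)
lemma lin_sub: "linear f \<Longrightarrow> linear g \<Longrightarrow> linear (\<lambda>x. f x - g x)"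
  by (auto simp: linear_iff algebra_simps)
lemma lin_scale: "linear f \<Longrightarrow> linear (\<lambda>x. c *\<^sub>R f x)"
  by (auto simp: linear_iff algebra_simps)
lemma lin_zero: "linear (\<lambda>x. 0)"
  by (auto simp: linear_iff)
lemma lin_id: "linear (\<lambda>x. x)"
  by (auto simp: linear_iff)
lemma lin_comp: "linear f \<Longrightarrow> linear g \<Longrightarrow> linear (\<lambda>x. f (g x))"
  by (auto simp: linear_iff)

typedef (overloaded) 'a lop = "{f :: 'a::euclidean_space \<Rightarrow> 'a. linear f}" morphisms app Lop
  using lin_id by blast

setup_lifting type_definition_lop

instantiation lop :: (euclidean_space) real_algebra_1
begin
lift_definition zero_lop :: "'a lop" is "\<lambda>x. 0" by (rule lin_zero)
lift_definition one_lop :: "'a lop" is "\<lambda>x. x" by (rule lin_id)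
lift_definition plus_lop :: "'a lop \<Rightarrow> 'a lop \<Rightarrow> 'a lop" is "\<lambda>f g x. f x + g x" by (rule lin_add)
lift_definition minus_lop :: "'a lop \<Rightarrow> 'a lop \<Rightarrow> 'a lop" is "\<lambda>f g x. f x - g x" by (rule lin_sub)
lift_definition uminus_lop :: "'a lop \<Rightarrow> 'a lop" is "\<lambda>f x. - f x" by (rule lin_neg)
lift_definition times_lop :: "'a lop \<Rightarrow> 'a lop \<Rightarrow> 'a lop" is "\<lambda>f g x. f (g x)" by (rule lin_comp)
lift_definition scaleR_lop :: "real \<Rightarrow> 'a lop \<Rightarrow> 'a lop" is "\<lambda>c f x. c *\<^sub>R f x" by (rule lin_scale)
instance
proof
  show "(0::'a lop) \<noteq> 1"
  proof
    assume "(0::'a lop) = 1"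
    then have "\<And>x::'a. app 0 x = app 1 x" by simp
    then have "\<And>x::'a. 0 = x" by (simp add: zero_lop.rep_eq one_lop.rep_eq)
    then show False by (metis SOME_Basis nonzero_Basis)
  qed
qed (transfer; auto simp: algebra_simps linear_iff fun_eq_iff)+
end

lemma app_plus[simp]: "app (a + b) x = app a x + app b x" by transfer simp
lemma app_minus[simp]: "app (a - b) x = app a x - app b x" by transfer simp
lemma app_uminus[simp]: "app (- a) x = - app a x" by transfer simp
lemma app_times[simp]: "app (a * b) x = app a (app b x)" by transfer simp
lemma app_scaleR[simp]: "app (c *\<^sub>R a) x = c *\<^sub>R app a x" by transfer simp
lemma app_zero[simp]: "app 0 x = 0" by transfer simp
lemma app_one[simp]: "app 1 x = x" by transfer simp
lemma app_Lop[simp]: "linear f \<Longrightarrow> app (Lop f) = f" by (simp add: Lop_inverse)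
lemma app_linear: "linear (app a)" using app by auto
lemma app_power: "app (a ^ n) x = (app a ^^ n) x"
  by (induction n arbitrary: x) (auto simp: funpow_Suc_right)
lemma lop_eqI: "(\<And>x. app a x = app b x) \<Longrightarrow> a = b"
  by (simp add: app_inject[symmetric] fun_eq_iff)
lemma app_sum: "app (sum f S) x = (\<Sum>i\<in>S. app (f i) x)"
  by (induction S rule: infinite_finite_induct) auto


section \<open>Polynomial evaluation in a real algebra\<close>

definition peval :: "real poly \<Rightarrow> 'a::real_algebra_1 \<Rightarrow> 'a" where
  "peval p a = (\<Sum>i\<le>degree p. coeff p i *\<^sub>R a ^ i)"

lemma peval_alt: "degree p < n \<Longrightarrow> peval p a = (\<Sum>i<n. coeff p i *\<^sub>R a ^ i)"
  unfolding peval_def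
  by (rule sum.mono_neutral_left) (auto simp: coeff_eq_0)

lemma peval_0[simp]: "peval 0 a = 0"
  by (simp add: peval_def)

lemma peval_pCons: "peval (pCons c p) a = c *\<^sub>R 1 + a * peval p a"
proof -
  define n where "n = Suc (degree p)"
  have d1: "degree (pCons c p) < Suc n" unfolding n_def
    by (metis degree_pCons_le le_imp_less_Suc)
  have d2: "degree p < n" unfolding n_def by simp
  have "peval (pCons c p) a = (\<Sum>i<Suc n. coeff (pCons c p) i *\<^sub>R a ^ i)"
    by (rule peval_alt[OF d1])
  also have "\<dots> = c *\<^sub>R 1 + (\<Sum>i<n. coeff p i *\<^sub>R a ^ Suc i)"
    by (subst sum.lessThan_Suc_shift) simp
  also have "(\<Sum>i<n. coeff p i *\<^sub>R a ^ Suc i) = a * (\<Sum>i<n. coeff p i *\<^sub>R a ^ i)"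
    by (simp add: sum_distrib_left mult_scaleR_right)
  finally show ?thesis by (simp add: peval_alt[OF d2])
qed

lemma peval_const[simp]: "peval [:c:] a = c *\<^sub>R 1"
  using peval_pCons[of c 0 a] by simp

lemma peval_1[simp]: "peval 1 a = 1"
  by (simp add: one_pCons)

lemma peval_x[simp]: "peval [:0,1:] a = a"
  by (simp add: peval_pCons)

lemma peval_add[simp]: "peval (p + q) a = peval p a + peval q a"
proof (induction p arbitrary: q)
  case 0 then show ?case by simp
next
  case (pCons c p)
  show ?case
  proof (cases q rule: pCons_cases)
    case (pCons d q')
    then show ?thesis using pCons.IH[of q']
      by (simp add: peval_pCons scaleR_add_left distrib_left)
  qed
qed

lemma peval_smult[simp]: "peval (smult c p) a = c *\<^sub>R peval p a"
  by (induction p) (simp_all add: peval_pCons scaleR_add_right mult_scaleR_right)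

lemma peval_uminus[simp]: "peval (- p) a = - peval p a"
  using peval_smult[of "-1" p a] by simp

lemma peval_diff[simp]: "peval (p - q) a = peval p a - peval q a"
  using peval_add[of p "-q" a] by simp

lemma peval_mult[simp]: "peval (p * q) a = peval p a * peval q a"
  by (induction p) (simp_all add: peval_pCons algebra_simps peval_pCons[of 0, simplified])

lemma peval_power[simp]: "peval (p ^ n) a = peval p a ^ n"
  by (induction n) simp_all

lemma peval_commute: "b * a = a * b \<Longrightarrow> b * peval p a = peval p a * b"
proof (induction p)
  case 0 then show ?case by simp
next
  case (pCons c p)
  then show ?case
    by (simp add: peval_pCons algebra_simps mult_scaleR_left mult_scaleR_right)
      (metis mult.assoc)
qed

lemma peval_pcompose: "peval (pcompose p q) a = peval p (peval q a)"
  by (induction p) (simp_all add: pcompose_pCons peval_pCons)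

lemma peval_commute2: "peval p a * peval q a = peval q a * peval p a"
  by (metis peval_mult mult.commute)


lemma nil_sum:
  fixes a b :: "'a::ring_1"
  assumes ab: "a * b = b * a" and am: "a ^ m = 0" and bn: "b ^ n = 0"
  shows "(a + b) ^ (m + n) = 0"
proof -
  have "\<forall>i j. m + n \<le> i + j + k \<longrightarrow> a ^ i * b ^ j * (a + b) ^ k = 0" for k
  proof (induction k)
    case 0
    show ?case
    proof (intro allI impI)
      fix i j assume "m + n \<le> i + j + 0"
      then have "m \<le> i \<or> n \<le> j" by arith
      then show "a ^ i * b ^ j * (a + b) ^ 0 = 0"
      proof
        assume "m \<le> i" then have "a ^ i = a ^ m * a ^ (i - m)" by (simp add: power_add[symmetric])
        then show ?thesis using am by simp
      next
        assume "n \<le> j" then have "b ^ j = b ^ n * b ^ (j - n)" by (simp add: power_add[symmetric])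
        then show ?thesis using bn by simp
      qed
    qed
  next
    case (Suc k)
    show ?case
    proof (intro allI impI)
      fix i j assume h: "m + n \<le> i + j + Suc k"
      have c: "b ^ j * a = a * b ^ j" using power_commuting_commutes[OF ab[symmetric]] by simp
      have "a ^ i * b ^ j * (a + b) ^ Suc k = (a ^ i * (b ^ j * a) + a ^ i * b ^ j * b) * (a + b) ^ k"
        by (simp add: algebra_simps)
      also have "\<dots> = (a ^ Suc i * b ^ j + a ^ i * b ^ Suc j) * (a + b) ^ k"
        by (simp only: c power_Suc2 mult.assoc)
      also have "\<dots> = a ^ Suc i * b ^ j * (a + b) ^ k + a ^ i * b ^ Suc j * (a + b) ^ k"
        by (simp only: distrib_right)
      also have "\<dots> = 0" using Suc.IH[rule_format, of "Suc i" j] Suc.IH[rule_format, of i "Suc j"] h by simp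
      finally show "a ^ i * b ^ j * (a + b) ^ Suc k = 0" .
    qed
  qed
  from this[of "m + n", rule_format, of 0 0] have "a ^ 0 * b ^ 0 * (a + b) ^ (m + n) = 0" by simp
  then show ?thesis by simp
qed

lemma nil_mult_pow:
  fixes a b :: "'a::ring_1"
  assumes ab: "a * b = b * a"
  shows "(a * b) ^ n = a ^ n * b ^ n"
proof (induction n)
  case 0 then show ?case by simp
next
  case (Suc n)
  have c: "b * a ^ n = a ^ n * b" using power_commuting_commutes[OF ab] by metis
  have "(a * b) ^ Suc n = (a * b) * (a ^ n * b ^ n)" using Suc by (simp only: power_Suc)
  also have "\<dots> = a * (b * a ^ n) * b ^ n" by (simp only: mult.assoc)
  also have "\<dots> = a * (a ^ n * b) * b ^ n" by (simp only: c)
  also have "\<dots> = (a * a ^ n) * (b * b ^ n)" by (simp only: mult.assoc)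
  finally show ?case by (simp only: power_Suc)
qed

lemma nil_mult:
  fixes a b :: "'a::ring_1"
  assumes ab: "a * b = b * a" and an: "a ^ n = 0"
  shows "(a * b) ^ n = 0"
  by (simp only: nil_mult_pow[OF ab] an mult_zero_left)

lemma nil_neg:
  fixes a :: "'a::ring_1"
  assumes "a ^ n = 0" shows "(- a) ^ n = 0"
proof -
  have "(- a) ^ n = (- 1) ^ n * a ^ n" by (rule power_minus)
  then show ?thesis using assms by simp
qed

lemma sq_unique:
  fixes x s :: "'a::real_algebra_1"
  assumes xx: "x * x = -1" and ss: "s * s = -1" and xs: "x * s = s * x"
    and nil: "(x - s) ^ n = 0"
  shows "x = s"
proof -
  define d where "d = x - s"
  define c :: real where "c = - 1 / 2"
  have e1: "d * d = d * x + d * x"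
  proof -
    have "d * d = x * x - x * s - s * x + s * s" unfolding d_def by (simp add: algebra_simps)
    moreover have "d * x + d * x = x * x - s * x + x * x - s * x" unfolding d_def by (simp add: algebra_simps)
    ultimately show ?thesis using xx ss xs by simp
  qed
  have dxx: "d * x * x = - d" using xx by (simp add: mult.assoc)
  have "d * d * x = - (d + d)" using e1 dxx by (simp add: distrib_right)
  then have dd: "d = c *\<^sub>R (d * d * x)" unfolding c_def
    using scaleR_half_double[of d] by (simp add: scaleR_add_right scaleR_diff_right)
  have "d = c ^ i *\<^sub>R (d ^ Suc i * x ^ i)" for i
  proof (induction i)
    case 0 then show ?case by simp
  next
    case (Suc i)
    have "d ^ Suc i * x ^ i = d ^ i * d * x ^ i"
      by (simp only: power_Suc2)
    also have "\<dots> = d ^ i * (c *\<^sub>R (d * d * x)) * x ^ i"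
      using dd by simp
    also have "\<dots> = c *\<^sub>R (d ^ i * d * d * (x * x ^ i))"
      by (simp only: mult_scaleR_left mult_scaleR_right mult.assoc)
    also have "\<dots> = c *\<^sub>R (d ^ Suc (Suc i) * x ^ Suc i)"
      by (simp only: power_Suc2[of d] power_Suc[of x])
    finally show ?case using Suc by (simp add: mult.commute)
  qed
  from this[of n] have "d = 0" using nil unfolding d_def
    by (simp add: power_Suc2)
  then show ?thesis unfolding d_def by simp
qed


section \<open>Polynomial square root\<close>

lemma sqrt_poly_ex:
  "\<exists>g :: real poly. poly g 0 = 1 \<and> [:0,1:] ^ (2 ^ n) dvd ([:1,-1:] * g ^ 2 - 1)"
proof (induction n)
  case 0
  have "[:1,-1:] * 1 ^ 2 - 1 = [:0,1:] * [:-1::real:]"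
    by (simp only: power_one mult_1_right) (simp add: one_pCons)
  then have "[:0,1:] dvd ([:1,-1:] * 1 ^ 2 - 1 :: real poly)" by (simp only: dvd_triv_left)
  then have "[:0,1:] ^ (2^0) dvd ([:1,-1:] * 1 ^ 2 - 1 :: real poly)" by (simp only: power_0 power_one_right)
  moreover have "poly (1::real poly) 0 = 1" by simp
  ultimately show ?case by blast
next
  case (Suc n)
  then obtain g :: "real poly" where g0: "poly g 0 = 1" and gd: "[:0,1:] ^ (2 ^ n) dvd [:1,-1:] * g ^ 2 - 1"
    by blast
  from gd obtain r where gr: "[:1,-1:] * g ^ 2 - 1 = [:0,1:] ^ (2 ^ n) * r" by (rule dvdE)
  define d where "d = [:1,-1:] * g ^ 2 - 1"
  define h :: "real poly" where "h = [:1/2:]"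
  have h2: "2 * h = 1" unfolding h_def by (simp only: mult_2) (simp add: one_pCons)
  define g' where "g' = g * (1 - h * d)"
  have u: "[:1,-1:] * g ^ 2 = 1 + d" unfolding d_def by simp
  have "[:1,-1:] * g' ^ 2 - 1 = ([:1,-1:] * g ^ 2) * (1 - h * d) ^ 2 - 1"
    unfolding g'_def by (simp only: power_mult_distrib mult.assoc)
  also have "\<dots> = (1 + d) * (1 - h * d) ^ 2 - 1" by (simp only: u)
  also have "\<dots> = d ^ 2 * (h ^ 2 * d + h ^ 2 - 2 * h) + d * (1 - 2 * h)"
    by (simp add: algebra_simps power2_eq_square)
  also have "\<dots> = d ^ 2 * (h ^ 2 * d + h ^ 2 - 1)" by (simp add: h2)
  finally have e: "[:1,-1:] * g' ^ 2 - 1 = d ^ 2 * (h ^ 2 * d + h ^ 2 - 1)" .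
  have "d ^ 2 = [:0,1:] ^ (2 ^ Suc n) * r ^ 2" unfolding d_def gr
    by (simp add: power_mult_distrib power_mult[symmetric] mult.commute)
  then have dv: "[:0,1:] ^ (2 ^ Suc n) dvd [:1,-1:] * g' ^ 2 - 1" unfolding e by simp
  have "poly d 0 = 0" unfolding d_def gr by simp
  then have "poly g' 0 = 1" unfolding g'_def using g0 by simp
  with dv show ?case by blast
qed

lemma pcompose_power': "pcompose (p ^ n) q = (pcompose p q) ^ n"
  by (induction n) (simp_all add: pcompose_mult pcompose_1)

lemma pcompose_x: "pcompose [:0,1:] (q :: real poly) = q"
  by (simp add: pcompose_pCons smult_1_left)

lemma peval_q: "peval [:1,0,1:] m = m * m + 1"
  by (simp add: peval_pCons algebra_simps)

lemma sqrt_op: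
  fixes m :: "'a::real_algebra_1"
  assumes nk: "(m * m + 1) ^ k = 0"
  shows "\<exists>w. peval w m * peval w m = -1 \<and> (m - peval w m) ^ k = 0"
proof -
  define q :: "real poly" where "q = [:1,0,1:]"
  have k2: "k \<le> 2 ^ k" by (simp add: less_imp_le)
  obtain g :: "real poly" where g0: "poly g 0 = 1" and gd: "[:0,1:] ^ (2 ^ k) dvd ([:1,-1:] * g ^ 2 - 1)"
    using sqrt_poly_ex by blast
  then obtain r where gr: "[:1,-1:] * g ^ 2 - 1 = [:0,1:] ^ (2 ^ k) * r" by (auto simp: dvd_def)
  have "[:0,1:] dvd (1 - g)" using g0 by (simp add: dvd_iff_poly_eq_0)
  then obtain s where gs: "1 - g = [:0,1:] * s" by (auto simp: dvd_def)
  define G where "G = pcompose g q"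
  define w where "w = [:0,1:] * G"
  have qk: "peval q m ^ (2 ^ k) = 0"
  proof -
    have "peval q m ^ (2 ^ k) = (m * m + 1) ^ k * (m * m + 1) ^ (2 ^ k - k)"
      unfolding q_def peval_q by (simp add: power_add[symmetric] k2)
    then show ?thesis using nk by simp
  qed
  have pc1: "pcompose [:1,-1:] q = 1 - q" unfolding q_def
    by (simp add: pcompose_pCons one_pCons)
  have "pcompose ([:1,-1:] * g ^ 2 - 1) q = (1 - q) * G ^ 2 - 1"
    by (simp only: pcompose_diff pcompose_mult pcompose_power' pc1 G_def pcompose_1)
  also have "1 - q = - ([:0,1:] * [:0,1:])" unfolding q_def by (simp add: one_pCons)
  finally have e0: "pcompose ([:1,-1:] * g ^ 2 - 1) q = - ([:0,1:] * [:0,1:]) * G ^ 2 - 1" .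
  have e1: "w * w + 1 = - pcompose ([:1,-1:] * g ^ 2 - 1) q"
    unfolding e0 w_def by (simp only: algebra_simps power2_eq_square minus_mult_left minus_minus)
  have "pcompose ([:1,-1:] * g ^ 2 - 1) q = q ^ (2 ^ k) * pcompose r q"
    unfolding gr by (simp add: pcompose_mult pcompose_power' pcompose_x)
  then have "peval (w * w + 1) m = 0" unfolding e1 using qk by simp
  then have sq: "peval w m * peval w m = -1" by (simp add: eq_neg_iff_add_eq_0)
  have "[:0,1:] - w = [:0,1:] * pcompose (1 - g) q" unfolding w_def G_def
    by (simp add: pcompose_diff pcompose_1 algebra_simps)
  also have "\<dots> = ([:0,1:] * pcompose s q) * q" unfolding gs
    by (simp only: pcompose_mult pcompose_x mult_ac)
  finally have "peval ([:0,1:] - w) m = peval ([:0,1:] * pcompose s q * q) m" by (rule arg_cong)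
  then have "peval ([:0,1:] - w) m = peval ([:0,1:] * pcompose s q) m * peval q m" by (simp only: peval_mult)
  then have "(m - peval w m) ^ k = (peval ([:0,1:] * pcompose s q) m * peval q m) ^ k" by simp
  also have "\<dots> = peval ([:0,1:] * pcompose s q) m ^ k * peval q m ^ k"
    by (rule nil_mult_pow[OF peval_commute2])
  also have "peval q m ^ k = 0" unfolding q_def peval_q by (rule nk)
  finally show ?thesis using sq by auto
qed


section \<open>Semisimple with nilpotent q(J) implies J^2 = -1\<close>

abbreviation mR :: "real poly \<Rightarrow> complex poly" where "mR p \<equiv> map_poly complex_of_real p"

lemma mR_add: "mR (p + q) = mR p + mR q"
  by (intro poly_eqI) (simp add: coeff_map_poly)

lemma mR_smult: "mR (smult c p) = smult (complex_of_real c) (mR p)"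
  by (intro poly_eqI) (simp add: coeff_map_poly)

lemma mR_mult: "mR (p * q) = mR p * mR q"
  by (induction p) (simp_all add: map_poly_pCons mR_add mR_smult)

lemma mR_pderiv: "mR (pderiv p) = pderiv (mR p)"
  by (intro poly_eqI) (simp add: coeff_map_poly coeff_pderiv)

lemma q_irred: "irreducible [:1,0,1::real:]"
proof (rule irreducibleI)
  show "[:1,0,1::real:] \<noteq> 0" by simp
  show "\<not> [:1,0,1::real:] dvd 1" by (subst is_unit_iff_degree) auto
  fix a b :: "real poly" assume qab: "[:1,0,1:] = a * b"
  show "a dvd 1 \<or> b dvd 1"
  proof (rule ccontr)
    assume nu: "\<not> (a dvd 1 \<or> b dvd 1)"
    have a0: "a \<noteq> 0" and b0: "b \<noteq> 0" using qab by auto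
    have da: "degree a \<noteq> 0" using nu a0 is_unit_iff_degree by blast
    have db: "degree b \<noteq> 0" using nu b0 is_unit_iff_degree by blast
    have "degree a + degree b = 2" using degree_mult_eq[OF a0 b0] qab[symmetric] by simp
    then have "degree a = 1" using da db by arith
    then obtain c0 c1 where a: "a = [:c0, c1:]" and c1: "c1 \<noteq> 0" by (rule degree1_coeffs)
    define z where "z = - c0 / c1"
    have "poly a z = 0" unfolding a z_def using c1 by simp
    then have "poly [:1,0,1:] z = 0" unfolding qab by simp
    moreover have "poly [:1,0,1::real:] z > 0" by (simp add: add_pos_nonneg)
    ultimately show False by simp
  qed
qed

lemma q_sq_not_dvd:
  fixes p :: "real poly"
  assumes simple: "\<forall>z :: complex. poly (mR p) z = 0 \<longrightarrow> poly (pderiv (mR p)) z \<noteq> 0"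
  shows "\<not> [:1,0,1:] * [:1,0,1:] dvd p"
proof
  assume "[:1,0,1:] * [:1,0,1:] dvd p"
  then obtain h where "p = ([:1,0,1:] * [:1,0,1:]) * h" by (rule dvdE)
  then have p: "p = [:1,0,1:] * ([:1,0,1:] * h)" by (simp only: mult.assoc)
  define mq where "mq = mR [:1,0,1:]"
  have mp: "mR p = mq * (mq * mR h)" unfolding p mq_def by (simp only: mR_mult)
  have qi: "poly mq \<i> = 0" unfolding mq_def by (simp add: map_poly_pCons)
  have "poly (mR p) \<i> = 0" unfolding mp using qi by simp
  moreover have "poly (pderiv (mR p)) \<i> = 0" unfolding mp pderiv_mult using qi by simp
  ultimately show False using simple by blast
qed

lemma semisimple_sq:
  fixes j :: "'a::real_algebra_1" and p :: "real poly"
  assumes pj: "peval p j = 0" and p0: "p \<noteq> 0"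
    and simple: "\<forall>z :: complex. poly (mR p) z = 0 \<longrightarrow> poly (pderiv (mR p)) z \<noteq> 0"
    and nil: "(j * j + 1) ^ r = 0"
  shows "j * j = -1"
proof -
  define q :: "real poly" where "q = [:1,0,1:]"
  have prime: "prime_elem q" unfolding q_def by (rule field_poly_irreducible_imp_prime[OF q_irred])
  obtain e h where peh: "p = h * q ^ e" and e1: "e \<le> 1" and nq: "\<not> q dvd h"
  proof (cases "q dvd p")
    case True
    then obtain h where ph: "p = q * h" by (auto simp: dvd_def)
    have "\<not> q dvd h"
    proof
      assume "q dvd h"
      then have "q * q dvd p" unfolding ph by simp
      then show False using q_sq_not_dvd[OF simple] unfolding q_def by blast
    qed
    then show ?thesis using that[of h 1] ph by (simp add: mult.commute)
  next
    case False
    then show ?thesis using that[of p 0] by simp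
  qed
  have "coprime q h" by (rule prime_elem_imp_coprime[OF prime nq])
  then have cop: "coprime h (q ^ r)" by (simp add: coprime_commute)
  obtain a b where ab: "a * h + b * q ^ r = gcd h (q ^ r)"
    using bezout_coefficients_fst_snd by blast
  have "gcd h (q ^ r) = 1" using cop by simp
  then have "peval (a * h + b * q ^ r) j = 1" using ab by simp
  moreover have "peval (q ^ r) j = 0" unfolding q_def using nil by (simp add: peval_q)
  ultimately have ah: "peval a j * peval h j = 1" by simp
  have "peval h j * peval (q ^ e) j = 0" using pj peh by simp
  then have "peval a j * peval h j * peval (q ^ e) j = 0" by (simp add: mult.assoc)
  then have qe: "peval (q ^ e) j = 0" using ah by simp
  have "peval q j = peval (q ^ (1 - e)) j * peval (q ^ e) j"
    using e1 by (simp add: power_add[symmetric])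
  then have "peval q j = 0" using qe by simp
  then show ?thesis unfolding q_def peval_q by (simp add: eq_neg_iff_add_eq_0)
qed


lemma comm_lemma:
  fixes a b c :: "'a::ring_1"
  assumes "a * b = b * a" "a * c = c * a"
  shows "a * (b * c) = (b * c) * a" "a * (b + c) = (b + c) * a" "a * (b - c) = (b - c) * a"
    "a * (- b) = (- b) * a"
  using assms by (simp_all add: algebra_simps) (metis mult.assoc)

lemma sq_nil:
  fixes x m :: "'a::ring_1"
  assumes xx: "x * x = -1" and xm: "x * m = m * x" and nil: "(m - x) ^ k = 0"
  shows "(m * m + 1) ^ k = 0"
proof -
  define n where "n = m - x"
  have nx: "n * x = x * n" unfolding n_def using xm by (simp add: algebra_simps)
  have e: "m * m + 1 = n * (x + x + n)"
  proof -
    have "m = x + n" unfolding n_def by simp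
    then have "m * m + 1 = x * x + x * n + n * x + n * n + 1" by (simp add: algebra_simps)
    also have "\<dots> = n * (x + x + n)" using xx nx by (simp add: algebra_simps)
    finally show ?thesis .
  qed
  have c: "n * (x + x + n) = (x + x + n) * n" using nx by (simp add: algebra_simps)
  show ?thesis unfolding e by (rule nil_mult[OF c]) (simp add: n_def nil)
qed

lemma nil_sq:
  fixes x m :: "'a::ring_1"
  assumes xm: "x * m = m * x" and k: "(m * m + 1) ^ k = 0" and nil: "(m - x) ^ l = 0"
  shows "(x * x + 1) ^ (k + l) = 0"
proof -
  define n where "n = m - x"
  have nm: "n * m = m * n" unfolding n_def using xm by (simp add: algebra_simps)
  have e: "x * x + 1 = (m * m + 1) + n * (n - m - m)"
  proof -
    have xe: "x = m - n" unfolding n_def by simp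
    have "x * x + 1 = (m - n) * (m - n) + 1" by (simp only: xe)
    also have "\<dots> = (m * m + 1) + n * (n - m - m)" using nm by (simp add: algebra_simps)
    finally show ?thesis .
  qed
  have c1: "n * (n - m - m) = (n - m - m) * n" using nm by (simp add: algebra_simps)
  have n2: "(n * (n - m - m)) ^ l = 0" by (rule nil_mult[OF c1]) (simp add: n_def nil)
  have c2: "(m * m + 1) * (n * (n - m - m)) = (n * (n - m - m)) * (m * m + 1)"
  proof -
    have a: "n * (m * y) = m * (n * y)" for y by (metis mult.assoc nm)
    show ?thesis by (simp add: algebra_simps nm a)
  qed
  show ?thesis unfolding e by (rule nil_sum[OF c2 k n2])
qed

lemma core_unique:
  fixes m :: "'a::real_algebra_1"
  assumes k: "(m * m + 1) ^ k = 0"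
  shows "\<exists>s. (\<forall>x. x * m = m * x \<longrightarrow> x * s = s * x) \<and>
             (\<forall>x l. x * x = -1 \<and> x * m = m * x \<and> (m - x) ^ l = 0 \<longrightarrow> x = s)"
proof -
  obtain w where ss: "peval w m * peval w m = -1" and ns: "(m - peval w m) ^ k = 0"
    using sqrt_op[OF k] by blast
  define s where "s = peval w m"
  have comm: "x * m = m * x \<Longrightarrow> x * s = s * x" for x
    unfolding s_def by (rule peval_commute)
  have sm: "s * m = m * s" unfolding s_def by (metis peval_commute)
  show ?thesis
  proof (intro exI conjI allI impI)
    fix x assume "x * m = m * x" then show "x * s = s * x" by (rule comm)
  next
    fix x l assume h: "x * x = -1 \<and> x * m = m * x \<and> (m - x) ^ l = 0"
    then have xx: "x * x = -1" and xm: "x * m = m * x" and nx: "(m - x) ^ l = 0" by auto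
    have xs: "x * s = s * x" using comm[OF xm] .
    have c: "(m - s) * (- (m - x)) = (- (m - x)) * (m - s)"
      using xm sm xs by (simp add: algebra_simps)
    have n1: "(m - s) ^ k = 0" using ns by (simp add: s_def)
    have n2: "(- (m - x)) ^ l = 0" by (rule nil_neg[OF nx])
    have "((m - s) + (- (m - x))) ^ (k + l) = 0"
      by (rule nil_sum[OF c n1 n2])
    then have "(x - s) ^ (k + l) = 0" by (simp add: algebra_simps)
    show "x = s" by (rule sq_unique[OF xx ss[folded s_def] xs]) fact
  qed
qed


lemma app_peval: "app (peval p a) x = poly_op p (app a) x"
  unfolding peval_def poly_op_def by (simp add: app_sum app_power)

lemma lin_app_Lop: "linear f \<Longrightarrow> app (Lop f) x = f x" by simp

lemma aut_comm_P:
  assumes bilB: "bilinear B" and nondegB: "\<forall>u. (\<forall>v. B u v = 0) \<longrightarrow> u = 0"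
    and PA: "\<forall>u v. A u v = B (P u) v"
    and Q: "Q \<in> aut_real A B"
  shows "P (Q u) = Q (P u)"
proof -
  from Q have lQ: "linear Q" and bQ: "bij Q" and QA: "\<forall>u v. A (Q u) (Q v) = A u v"
    and QB: "\<forall>u v. B (Q u) (Q v) = B u v" by (auto simp: aut_real_def)
  have "B (P (Q u) - Q (P u)) w = 0" for w
  proof -
    obtain v where w: "w = Q v" using bQ by (metis bij_pointE)
    have "B (P (Q u) - Q (P u)) (Q v) = B (P (Q u)) (Q v) - B (Q (P u)) (Q v)"
      by (rule bilinear_lsub[OF bilB])
    also have "\<dots> = 0" using PA QA QB by simp
    finally show ?thesis using w by simp
  qed
  then have "P (Q u) - Q (P u) = 0" using nondegB by blast
  then show ?thesis by simp
qed



fun boff :: "nat list \<Rightarrow> nat \<Rightarrow> nat" where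
  "boff [] i = 0"
| "boff (k # ks) i = (if i < 4 * k then 0 else 4 * k + boff ks (i - 4 * k))"

fun bsz :: "nat list \<Rightarrow> nat \<Rightarrow> nat" where
  "bsz [] i = 0"
| "bsz (k # ks) i = (if i < 4 * k then k else bsz ks (i - 4 * k))"

lemma boff_props:
  assumes "i < 4 * sum_list ks"
  shows "boff ks i \<le> i \<and> i < boff ks i + 4 * bsz ks i \<and> even (boff ks i)
     \<and> bsz ks i \<in> set ks \<and> boff ks i + 4 * bsz ks i \<le> 4 * sum_list ks"
  using assms
proof (induction ks arbitrary: i)
  case Nil then show ?case by simp
next
  case (Cons k ks)
  show ?case
  proof (cases "i < 4 * k")
    case True then show ?thesis by simp
  next
    case False
    then have "i - 4 * k < 4 * sum_list ks" using Cons.prems by simp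
    from Cons.IH[OF this] False show ?thesis by auto
  qed
qed

lemma boff_same:
  assumes "i < 4 * sum_list ks" "boff ks i \<le> i'" "i' < boff ks i + 4 * bsz ks i"
  shows "boff ks i' = boff ks i \<and> bsz ks i' = bsz ks i"
  using assms
proof (induction ks arbitrary: i i')
  case Nil then show ?case by simp
next
  case (Cons k ks)
  show ?case
  proof (cases "i < 4 * k")
    case True then show ?thesis using Cons.prems by simp
  next
    case False
    then have i1: "i - 4 * k < 4 * sum_list ks" using Cons.prems by simp
    have "\<not> i' < 4 * k" using Cons.prems False by simp
    moreover have "boff ks (i - 4 * k) \<le> i' - 4 * k" "i' - 4 * k < boff ks (i - 4 * k) + 4 * bsz ks (i - 4 * k)"
      using Cons.prems False by auto
    ultimately show ?thesis using Cons.IH[OF i1] False by auto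
  qed
qed

lemma blockdiag_eq:
  assumes "\<forall>k\<in>set ks. 0 < k" "i < 4 * sum_list ks" "j < 4 * sum_list ks"
  shows "blockdiag M ks i j =
    (if boff ks i = boff ks j then M (bsz ks i) (i - boff ks i) (j - boff ks j) else 0)"
  using assms
proof (induction ks arbitrary: i j)
  case Nil then show ?case by simp
next
  case (Cons k ks)
  have k0: "0 < k" using Cons.prems by simp
  show ?case
  proof (cases "i < 4 * k")
    case True
    show ?thesis
    proof (cases "j < 4 * k")
      case True then show ?thesis using \<open>i < 4 * k\<close> by simp
    next
      case False then show ?thesis using \<open>i < 4 * k\<close> by simp
    qed
  next
    case False
    show ?thesis
    proof (cases "j < 4 * k")
      case True then show ?thesis using \<open>\<not> i < 4 * k\<close> by simp
    next
      case False
      have "i - 4 * k < 4 * sum_list ks" "j - 4 * k < 4 * sum_list ks" using Cons.prems \<open>\<not> i < 4 * k\<close> False by auto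
      from Cons.IH[OF _ this] Cons.prems False \<open>\<not> i < 4 * k\<close> show ?thesis by auto
    qed
  qed
qed

definition JJ :: "real \<Rightarrow> real \<Rightarrow> nat \<Rightarrow> nat \<Rightarrow> nat \<Rightarrow> nat \<Rightarrow> real" where
  "JJ \<alpha> \<beta> a r a' r' = (if a = a' then (if r = r' then \<alpha> else if r = 0 then - \<beta> else \<beta>)
     else if a' = Suc a \<and> r = r' then 1 else 0)"

definition gA :: "real \<Rightarrow> real \<Rightarrow> bool \<Rightarrow> nat \<Rightarrow> nat \<Rightarrow> bool \<Rightarrow> nat \<Rightarrow> nat \<Rightarrow> real" where
  "gA \<alpha> \<beta> p a r p' a' r' = (if \<not> p \<and> p' then JJ \<alpha> \<beta> a r a' r'
     else if p \<and> \<not> p' then - JJ \<alpha> \<beta> a' r' a r else 0)"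

definition gB :: "bool \<Rightarrow> nat \<Rightarrow> nat \<Rightarrow> bool \<Rightarrow> nat \<Rightarrow> nat \<Rightarrow> real" where
  "gB p a r p' a' r' = (if a = a' \<and> r = r' then (if \<not> p \<and> p' then 1 else if p \<and> \<not> p' then -1 else 0) else 0)"

definition enc :: "nat \<Rightarrow> bool \<Rightarrow> nat \<Rightarrow> nat \<Rightarrow> nat" where
  "enc k p a r = (if p then 2 * k else 0) + 2 * a + r"

lemma jk_J_loc:
  assumes "r < 2" "r' < 2"
  shows "jk_J \<alpha> \<beta> (2 * a + r) (2 * a' + r') = JJ \<alpha> \<beta> a r a' r'"
proof -
  have r: "r = 0 \<or> r = 1" and r': "r' = 0 \<or> r' = 1" using assms by auto
  show ?thesis using r r' unfolding jk_J_def JJ_def Let_def by auto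
qed

lemma jB_loc:
  assumes "a < k" "a' < k" "r < 2" "r' < 2"
  shows "jblock_B k (enc k p a r) (enc k p' a' r') = gB p a r p' a' r'"
  using assms unfolding jblock_B_def gB_def enc_def Let_def by (auto; presburger)

lemma jA_loc:
  assumes "a < k" "a' < k" "r < 2" "r' < 2"
  shows "jblock_A \<alpha> \<beta> k (enc k p a r) (enc k p' a' r') = gA \<alpha> \<beta> p a r p' a' r'"
  using assms unfolding jblock_A_def gA_def enc_def Let_def by (auto simp: jk_J_loc)


lemma boff_eq_bsz:
  assumes "\<forall>k\<in>set ks. 0 < k" "i < 4 * sum_list ks" "j < 4 * sum_list ks" "boff ks i = boff ks j"
  shows "bsz ks i = bsz ks j"
  using assms
proof (induction ks arbitrary: i j)
  case Nil then show ?case by simp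
next
  case (Cons k ks)
  have k0: "0 < k" using Cons.prems by simp
  show ?case
  proof (cases "i < 4 * k")
    case True
    then show ?thesis using Cons.prems k0 by (cases "j < 4 * k") auto
  next
    case False
    show ?thesis
    proof (cases "j < 4 * k")
      case True then show ?thesis using Cons.prems k0 False by auto
    next
      case jF: False
      have "i - 4 * k < 4 * sum_list ks" "j - 4 * k < 4 * sum_list ks" using Cons.prems False jF by auto
      from Cons.IH[OF _ this] Cons.prems False jF show ?thesis by auto
    qed
  qed
qed

lemma enc_dec:
  assumes "a < k" "r < 2"
  shows "(2 * k \<le> enc k p a r) = p"
    "(if p then enc k p a r - 2 * k else enc k p a r) div 2 = a"
    "enc k p a r mod 2 = r"
    "enc k p a r < 4 * k"
proof -
  have r: "r = 0 \<or> r = 1" using assms by auto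
  show "(2 * k \<le> enc k p a r) = p" "enc k p a r < 4 * k"
    using assms unfolding enc_def by auto
  show "(if p then enc k p a r - 2 * k else enc k p a r) div 2 = a" "enc k p a r mod 2 = r"
    using r unfolding enc_def by auto
qed

lemma aux2: "2 * ((l::nat) div 2) + l mod 2 = l"
  using div_mult_mod_eq[of l 2] by simp
lemma aux1: "2 * k \<le> (l::nat) \<Longrightarrow> 2 * k + 2 * ((l - 2 * k) div 2) + l mod 2 = l"
proof -
  assume "2 * k \<le> l"
  then obtain m where l: "l = 2 * k + m" using le_Suc_ex by blast
  have "l mod 2 = m mod 2" unfolding l by simp
  then show ?thesis unfolding l using aux2[of m] by simp
qed
lemma aux3: "even (c::nat) \<Longrightarrow> c \<le> i \<Longrightarrow> (i - c) mod 2 = i mod 2"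
proof -
  assume "even c" "c \<le> i"
  then obtain d m where c: "c = 2 * d" and i: "i = c + m" by (metis evenE le_Suc_ex)
  show ?thesis unfolding i c by simp
qed

definition sg :: "bool \<Rightarrow> nat \<Rightarrow> real" where
  "sg p r = (if (\<not> p) = (r = 0) then -1 else 1)"

definition lv :: "nat \<Rightarrow> bool \<Rightarrow> nat \<Rightarrow> nat" where
  "lv k p a = (if p then a else k - 1 - a)"

lemma T2:
  assumes "r < 2" "r' < 2"
  shows "sg p r * gB p a (1 - r) p' a' r' = sg p' r' * gB p a r p' a' (1 - r')"
proof -
  have "r = 0 \<or> r = 1" "r' = 0 \<or> r' = 1" using assms by auto
  then show ?thesis unfolding sg_def gB_def by (cases p; cases p') auto
qed

lemma T3:
  assumes "r < 2" "r' < 2"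
  shows "sg p r * gA \<alpha> \<beta> p a (1 - r) p' a' r' = sg p' r' * gA \<alpha> \<beta> p a r p' a' (1 - r')"
proof -
  have "r = 0 \<or> r = 1" "r' = 0 \<or> r' = 1" using assms by auto
  then show ?thesis unfolding sg_def gA_def JJ_def by (cases p; cases p') auto
qed

lemma T5:
  assumes "a < k" "a' < k" "r < 2" "r' < 2" "\<beta> \<noteq> 0"
    and ne: "(1 / \<beta>) * (gA \<alpha> \<beta> p a r p' a' r' - \<alpha> * gB p a r p' a' r') - sg p r * gB p a (1 - r) p' a' r' \<noteq> 0"
  shows "lv k (\<not> p') a' < lv k p a"
proof -
  have r: "r = 0 \<or> r = 1" "r' = 0 \<or> r' = 1" using assms by auto
  show ?thesis
  proof (cases p)
    case False
    then have p': "p'" using ne unfolding gA_def gB_def by (cases p') (auto split: if_splits)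
    have "a' = Suc a" using ne r False p' \<open>\<beta> \<noteq> 0\<close> unfolding gA_def gB_def JJ_def sg_def
      by (auto split: if_splits)
    then show ?thesis using False p' assms unfolding lv_def by auto
  next
    case True
    then have p': "\<not> p'" using ne unfolding gA_def gB_def by (cases p') (auto split: if_splits)
    have "a = Suc a'" using ne r True p' \<open>\<beta> \<noteq> 0\<close> unfolding gA_def gB_def JJ_def sg_def
      by (auto split: if_splits)
    then show ?thesis using True p' assms unfolding lv_def by auto
  qed
qed

lemma T4: "gA \<alpha> \<beta> p a r p' a' r' \<noteq> 0 \<Longrightarrow> p \<noteq> p'" "gB p a r p' a' r' \<noteq> 0 \<Longrightarrow> p \<noteq> p'"
  unfolding gA_def gB_def by (auto split: if_splits)

locale jb =
  fixes A B :: "'v::euclidean_space \<Rightarrow> 'v \<Rightarrow> real" and P :: "'v \<Rightarrow> 'v"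
    and \<alpha> \<beta> :: real and ks :: "nat list" and e :: "nat \<Rightarrow> 'v"
  assumes bilA: "bilinear A" and bilB: "bilinear B"
    and nondegB: "\<forall>u. (\<forall>v. B u v = 0) \<longrightarrow> u = 0"
    and beta: "\<beta> \<noteq> 0"
    and linP: "linear P" and PA: "\<forall>u v. A u v = B (P u) v"
    and kpos: "\<forall>k\<in>set ks. 0 < k"
    and injE: "inj_on e {..<4 * sum_list ks}"
    and spanE: "span (e ` {..<4 * sum_list ks}) = UNIV"
    and gram: "\<forall>i<4 * sum_list ks. \<forall>j<4 * sum_list ks.
        A (e i) (e j) = blockdiag (jblock_A \<alpha> \<beta>) ks i j \<and> B (e i) (e j) = blockdiag jblock_B ks i j"
begin

abbreviation "NN \<equiv> 4 * sum_list ks"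
definition "off i = boff ks i"
definition "sz i = bsz ks i"
definition "pp i = (2 * sz i \<le> i - off i)"
definition "aa i = (if pp i then i - off i - 2 * sz i else i - off i) div 2"
definition "rr i = i mod 2"
definition "tau i = (if even i then Suc i else i - 1)"
definition "rho i = (if pp i then i - 2 * sz i else i + 2 * sz i)"

lemma dec:
  assumes "i < NN"
  shows "i = off i + enc (sz i) (pp i) (aa i) (rr i)" "aa i < sz i" "rr i < 2" "0 < sz i"
    "even (off i)"
proof -
  have bp: "boff ks i \<le> i \<and> i < boff ks i + 4 * bsz ks i \<and> even (boff ks i)
     \<and> bsz ks i \<in> set ks \<and> boff ks i + 4 * bsz ks i \<le> 4 * sum_list ks"
    by (rule boff_props[OF assms])
  then show "0 < sz i" using kpos unfolding sz_def by blast
  show "even (off i)" using bp unfolding off_def by blast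
  show "rr i < 2" unfolding rr_def by simp
  have ev: "(i - off i) mod 2 = i mod 2" using bp unfolding off_def by (intro aux3) auto
  show "aa i < sz i" using bp unfolding aa_def pp_def off_def sz_def by auto
  have "enc (sz i) (pp i) (aa i) (rr i) = i - off i"
  proof (cases "pp i")
    case True
    then show ?thesis unfolding enc_def aa_def rr_def ev[symmetric]
      using aux1[of "sz i" "i - off i"] unfolding pp_def by simp
  next
    case False
    then show ?thesis unfolding enc_def aa_def rr_def ev[symmetric]
      using aux2[of "i - off i"] by simp
  qed
  then show "i = off i + enc (sz i) (pp i) (aa i) (rr i)" using bp unfolding off_def by simp
qed

lemma reenc:
  fixes p :: bool
  assumes i: "i < NN" and a: "a < sz i" and r: "r < 2"
  defines "i' \<equiv> off i + enc (sz i) p a r"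
  shows "i' < NN" "off i' = off i" "sz i' = sz i" "pp i' = p" "aa i' = a" "rr i' = r"
proof -
  have bp: "boff ks i \<le> i \<and> i < boff ks i + 4 * bsz ks i \<and> even (boff ks i)
     \<and> bsz ks i \<in> set ks \<and> boff ks i + 4 * bsz ks i \<le> 4 * sum_list ks"
    by (rule boff_props[OF i])
  have ed: "(2 * sz i \<le> enc (sz i) p a r) = p"
    "(if p then enc (sz i) p a r - 2 * sz i else enc (sz i) p a r) div 2 = a"
    "enc (sz i) p a r mod 2 = r" "enc (sz i) p a r < 4 * sz i"
    using enc_dec[OF a r] by auto
  have "off i \<le> i'" "i' < off i + 4 * sz i" unfolding i'_def using ed(4) by auto
  then have same: "boff ks i' = boff ks i \<and> bsz ks i' = bsz ks i"
    using boff_same[OF i] unfolding off_def sz_def by blast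
  then show "off i' = off i" "sz i' = sz i" unfolding off_def sz_def by auto
  show "i' < NN" using bp ed(4) unfolding i'_def off_def sz_def by auto
  have li: "i' - off i' = enc (sz i) p a r" using same unfolding i'_def off_def by simp
  have szi: "sz i' = sz i" using same unfolding sz_def by simp
  show ppi: "pp i' = p" unfolding pp_def li szi using ed(1) .
  show "aa i' = a" unfolding aa_def ppi li szi using ed(2) .
  have "even (off i)" using bp unfolding off_def by simp
  then obtain d where "off i = 2 * d" by (rule evenE)
  then show "rr i' = r" unfolding rr_def i'_def using ed(3) by simp
qed


lemma enc_r: "enc k p a 1 = Suc (enc k p a 0)" "enc k p a 0 = enc k p a 1 - 1"
  unfolding enc_def by auto

lemma tau_enc:
  assumes i: "i < NN" shows "tau i = off i + enc (sz i) (pp i) (aa i) (1 - rr i)"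
proof -
  have i': "i = off i + enc (sz i) (pp i) (aa i) (rr i)" and r: "rr i < 2"
    using dec[OF i] by auto
  show ?thesis
  proof (cases "rr i = 0")
    case True
    then have "even i" unfolding rr_def by (simp add: even_iff_mod_2_eq_zero)
    then have t: "tau i = Suc i" unfolding tau_def by simp
    have e0: "i = off i + enc (sz i) (pp i) (aa i) 0" using i' True by simp
    have "Suc i = off i + enc (sz i) (pp i) (aa i) 1"
      using e0 enc_r(1)[of "sz i" "pp i" "aa i"] by linarith
    then show ?thesis using t True by simp
  next
    case False
    then have r1: "rr i = 1" using r by simp
    then have "odd i" unfolding rr_def by (simp add: odd_iff_mod_2_eq_one)
    then have t: "tau i = i - 1" unfolding tau_def by simp
    have e1: "i = off i + enc (sz i) (pp i) (aa i) 1" using i' r1 by simp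
    have "i - 1 = off i + enc (sz i) (pp i) (aa i) 0"
      using e1 enc_r(1)[of "sz i" "pp i" "aa i"] by linarith
    then show ?thesis using t r1 by simp
  qed
qed

lemma tau_props:
  assumes i: "i < NN"
  shows "tau i < NN" "off (tau i) = off i" "sz (tau i) = sz i" "pp (tau i) = pp i"
    "aa (tau i) = aa i" "rr (tau i) = 1 - rr i"
  using reenc[OF i dec(2)[OF i], of "1 - rr i" "pp i"] tau_enc[OF i] by auto

lemma rho_enc:
  assumes i: "i < NN" shows "rho i = off i + enc (sz i) (\<not> pp i) (aa i) (rr i)"
proof -
  have i': "i = off i + enc (sz i) (pp i) (aa i) (rr i)" using dec[OF i] by auto
  show ?thesis
  proof (cases "pp i")
    case True
    then have t: "rho i = i - 2 * sz i" unfolding rho_def by simp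
    have e: "i = off i + (2 * sz i + 2 * aa i + rr i)" using i' True by (simp add: enc_def)
    have "i - 2 * sz i = off i + (2 * aa i + rr i)" using e by linarith
    then show ?thesis using t True by (simp add: enc_def)
  next
    case False
    then have t: "rho i = i + 2 * sz i" unfolding rho_def by simp
    have e: "i = off i + (2 * aa i + rr i)" using i' False by (simp add: enc_def)
    have "i + 2 * sz i = off i + (2 * sz i + 2 * aa i + rr i)" using e by linarith
    then show ?thesis using t False by (simp add: enc_def)
  qed
qed

lemma rho_props:
  assumes i: "i < NN"
  shows "rho i < NN" "off (rho i) = off i" "sz (rho i) = sz i" "pp (rho i) = (\<not> pp i)"
    "aa (rho i) = aa i" "rr (rho i) = rr i"
  using reenc[OF i dec(2)[OF i] dec(3)[OF i], of "\<not> pp i"] rho_enc[OF i] by auto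

lemma off_sz: "i < NN \<Longrightarrow> j < NN \<Longrightarrow> off i = off j \<Longrightarrow> sz i = sz j"
  unfolding off_def sz_def using boff_eq_bsz[OF kpos] by blast

lemma dec_inj:
  assumes "i < NN" "j < NN" "off i = off j" "pp i = pp j" "aa i = aa j" "rr i = rr j"
  shows "i = j"
proof -
  have "off i + enc (sz i) (pp i) (aa i) (rr i) = off j + enc (sz j) (pp j) (aa j) (rr j)"
    using assms off_sz[OF assms(1-3)] by simp
  then show ?thesis using dec(1)[OF assms(1)] dec(1)[OF assms(2)] by linarith
qed

lemma tau_tau: assumes i: "i < NN" shows "tau (tau i) = i"
proof -
  note t1 = tau_props[OF i]
  note t2 = tau_props[OF t1(1)]
  have r: "rr i < 2" by (rule dec(3)[OF i])
  show ?thesis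
  proof (rule dec_inj[OF t2(1) i])
    show "off (tau (tau i)) = off i" "pp (tau (tau i)) = pp i" "aa (tau (tau i)) = aa i"
      by (simp_all only: t1 t2)
    show "rr (tau (tau i)) = rr i" using r by (simp add: t1 t2)
  qed
qed

lemma rho_rho: assumes i: "i < NN" shows "rho (rho i) = i"
proof -
  note t1 = rho_props[OF i]
  note t2 = rho_props[OF t1(1)]
  show ?thesis
    by (rule dec_inj[OF t2(1) i]) (simp_all only: t1 t2 not_not)
qed

lemma gramA:
  assumes i: "i < NN" and j: "j < NN"
  shows "A (e i) (e j) = (if off i = off j then gA \<alpha> \<beta> (pp i) (aa i) (rr i) (pp j) (aa j) (rr j) else 0)"
proof -
  have "A (e i) (e j) = blockdiag (jblock_A \<alpha> \<beta>) ks i j" using gram i j by blast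
  also have "\<dots> = (if off i = off j then jblock_A \<alpha> \<beta> (sz i) (i - off i) (j - off j) else 0)"
    unfolding off_def sz_def by (rule blockdiag_eq[OF kpos i j])
  also have "\<dots> = (if off i = off j then gA \<alpha> \<beta> (pp i) (aa i) (rr i) (pp j) (aa j) (rr j) else 0)"
  proof (cases "off i = off j")
    case True
    have s: "sz j = sz i" using off_sz[OF i j True] by simp
    have "i - off i = enc (sz i) (pp i) (aa i) (rr i)" "j - off j = enc (sz i) (pp j) (aa j) (rr j)"
      using dec(1)[OF i] dec(1)[OF j] s by (metis add_diff_cancel_left')+
    then show ?thesis using True jA_loc dec(2,3)[OF i] dec(2,3)[OF j] s by simp
  qed simp
  finally show ?thesis .
qed

lemma gramB:
  assumes i: "i < NN" and j: "j < NN"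
  shows "B (e i) (e j) = (if off i = off j then gB (pp i) (aa i) (rr i) (pp j) (aa j) (rr j) else 0)"
proof -
  have "B (e i) (e j) = blockdiag jblock_B ks i j" using gram i j by blast
  also have "\<dots> = (if off i = off j then jblock_B (sz i) (i - off i) (j - off j) else 0)"
    unfolding off_def sz_def by (rule blockdiag_eq[OF kpos i j])
  also have "\<dots> = (if off i = off j then gB (pp i) (aa i) (rr i) (pp j) (aa j) (rr j) else 0)"
  proof (cases "off i = off j")
    case True
    have s: "sz j = sz i" using off_sz[OF i j True] by simp
    have "i - off i = enc (sz i) (pp i) (aa i) (rr i)" "j - off j = enc (sz i) (pp j) (aa j) (rr j)"
      using dec(1)[OF i] dec(1)[OF j] s by (metis add_diff_cancel_left')+
    then show ?thesis using True jB_loc dec(2,3)[OF i] dec(2,3)[OF j] s by simp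
  qed simp
  finally show ?thesis .
qed

definition "coord i x = (if pp i then -1 else 1) * B x (e (rho i))"
definition lmap :: "(nat \<Rightarrow> 'v) \<Rightarrow> 'v \<Rightarrow> 'v" where "lmap f x = (\<Sum>i<NN. coord i x *\<^sub>R f i)"

lemma linB1: "linear (\<lambda>x. B x y)" using bilB unfolding bilinear_def by blast
lemma linB2: "linear (\<lambda>y. B x y)" using bilB unfolding bilinear_def by blast
lemma linA1: "linear (\<lambda>x. A x y)" using bilA unfolding bilinear_def by blast
lemma linA2: "linear (\<lambda>y. A x y)" using bilA unfolding bilinear_def by blast

lemma lin_coord: "linear (coord i)"
  unfolding coord_def[abs_def] using linB1 by (auto simp: linear_iff)

lemma coord_e:
  assumes i: "i < NN" and l: "l < NN"
  shows "coord i (e l) = (if i = l then 1 else 0)"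
proof -
  have r: "rho i < NN" "off (rho i) = off i" "pp (rho i) = (\<not> pp i)" "aa (rho i) = aa i" "rr (rho i) = rr i"
    using rho_props[OF i] by auto
  show ?thesis
  proof (cases "i = l")
    case True
    then show ?thesis unfolding coord_def using gramB[OF l r(1)] r by (simp add: gB_def)
  next
    case False
    then have "\<not> (off l = off i \<and> pp l = pp i \<and> aa l = aa i \<and> rr l = rr i)"
      using dec_inj[OF i l] by metis
    then show ?thesis unfolding coord_def using gramB[OF l r(1)] r False by (auto simp: gB_def)
  qed
qed

lemma expansion: "x = (\<Sum>i<NN. coord i x *\<^sub>R e i)"
proof -
  have "x \<in> span (e ` {..<NN})" using spanE by simp
  then obtain u where "x = (\<Sum>v\<in>e ` {..<NN}. u v *\<^sub>R v)"
    using span_finite[of "e ` {..<NN}"] by auto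
  also have "\<dots> = (\<Sum>i<NN. u (e i) *\<^sub>R e i)"
    by (subst sum.reindex[OF injE]) simp
  finally have x: "x = (\<Sum>i<NN. u (e i) *\<^sub>R e i)" .
  have c: "coord l x = u (e l)" if l: "l < NN" for l
  proof -
    have "coord l x = (\<Sum>i<NN. u (e i) * coord l (e i))"
      by (subst x) (simp add: linear_sum[OF lin_coord] linear_scale[OF lin_coord])
    also have "\<dots> = (\<Sum>i<NN. if i = l then u (e i) else 0)"
      using coord_e[OF l] by (intro sum.cong) auto
    also have "\<dots> = u (e l)" using l by simp
    finally show ?thesis .
  qed
  show ?thesis using x c by (metis (no_types, lifting) lessThan_iff sum.cong)
qed

lemma lin_expand: "linear F \<Longrightarrow> F x = (\<Sum>i<NN. coord i x *\<^sub>R F (e i))"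
  by (subst expansion) (simp add: linear_sum linear_scale)

lemma lin_eq: "linear F \<Longrightarrow> linear G \<Longrightarrow> (\<And>i. i < NN \<Longrightarrow> F (e i) = G (e i)) \<Longrightarrow> F x = G x"
  using lin_expand[of F x] lin_expand[of G x] by simp

lemma lin_lmap: "linear (lmap f)"
  unfolding lmap_def[abs_def] linear_iff
  by (auto simp: linear_add[OF lin_coord] linear_scale[OF lin_coord] scaleR_add_left sum.distrib
      scaleR_sum_right)

lemma lmap_e: assumes l: "l < NN" shows "lmap f (e l) = f l"
proof -
  have "lmap f (e l) = (\<Sum>i<NN. if i = l then f i else 0)" unfolding lmap_def
    by (rule sum.cong) (auto simp: coord_e l)
  then show ?thesis using l by simp
qed

lemma bil_eq:
  assumes "bilinear F" "bilinear G" "\<And>i j. i < NN \<Longrightarrow> j < NN \<Longrightarrow> F (e i) (e j) = G (e i) (e j)"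
  shows "F x y = G x y"
  by (rule bilinear_eq[OF assms(1,2), of UNIV "e ` {..<NN}" UNIV "e ` {..<NN}"])
     (use spanE assms(3) in auto)


definition sig :: "nat \<Rightarrow> real" where "sig i = sg (pp i) (rr i)"
definition JZ :: "'v \<Rightarrow> 'v" where "JZ = lmap (\<lambda>i. sig i *\<^sub>R e (tau i))"
definition "lev i = lv (sz i) (pp i) (aa i)"
definition Mf :: "'v \<Rightarrow> 'v" where "Mf x = (1 / \<beta>) *\<^sub>R (P x - \<alpha> *\<^sub>R x)"

lemma lin_JZ: "linear JZ" unfolding JZ_def using lin_lmap by blast

lemma JZ_e: "i < NN \<Longrightarrow> JZ (e i) = sig i *\<^sub>R e (tau i)"
  unfolding JZ_def by (rule lmap_e)

lemma sig_tau: "i < NN \<Longrightarrow> sig (tau i) = - sig i"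
  using tau_props[of i] dec(3)[of i] unfolding sig_def sg_def by auto

lemma sig_sq: "sig i * sig i = 1" unfolding sig_def sg_def by simp

lemma JZJZ: "JZ (JZ x) = - x"
proof (rule lin_eq[of "\<lambda>x. JZ (JZ x)" "\<lambda>x. - x"])
  show "linear (\<lambda>x. JZ (JZ x))" by (rule lin_comp[OF lin_JZ lin_JZ])
  show "linear (\<lambda>x. - x :: 'v)" by (rule lin_neg[OF lin_id])
  fix i assume i: "i < NN"
  have t: "tau i < NN" by (rule tau_props(1)[OF i])
  show "JZ (JZ (e i)) = - e i"
    using i t by (simp add: JZ_e linear_scale[OF lin_JZ] sig_tau tau_tau sig_sq)
qed

lemma bil_comp:
  assumes "bilinear F" "linear f" "linear g"
  shows "bilinear (\<lambda>x y. F (f x) (g y))"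
  using assms unfolding bilinear_def
  by (auto intro: lin_comp[of "\<lambda>y. F (f x) y" g for x] lin_comp[of "\<lambda>x. F x (g y)" f for y])

lemma bilB': "bilinear (\<lambda>x y. B x y)" using bilB by simp
lemma bilA': "bilinear (\<lambda>x y. A x y)" using bilA by simp

lemma JZ_selfadj_B: "B (JZ x) y = B x (JZ y)"
proof (rule bil_eq[of "\<lambda>x y. B (JZ x) y" "\<lambda>x y. B x (JZ y)"])
  show "bilinear (\<lambda>x y. B (JZ x) y)" using bil_comp[OF bilB lin_JZ lin_id] by simp
  show "bilinear (\<lambda>x y. B x (JZ y))" using bil_comp[OF bilB lin_id lin_JZ] by simp
  fix i j assume i: "i < NN" and j: "j < NN"
  note ti = tau_props[OF i] and tj = tau_props[OF j]
  show "B (JZ (e i)) (e j) = B (e i) (JZ (e j))"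
    using T2[OF dec(3)[OF i] dec(3)[OF j], where p="pp i" and a="aa i" and p'="pp j" and a'="aa j"]
    by (simp add: JZ_e i j bilinear_lmul[OF bilB] bilinear_rmul[OF bilB] gramB ti tj sig_def)
qed

lemma JZ_selfadj_A: "A (JZ x) y = A x (JZ y)"
proof (rule bil_eq[of "\<lambda>x y. A (JZ x) y" "\<lambda>x y. A x (JZ y)"])
  show "bilinear (\<lambda>x y. A (JZ x) y)" using bil_comp[OF bilA lin_JZ lin_id] by simp
  show "bilinear (\<lambda>x y. A x (JZ y))" using bil_comp[OF bilA lin_id lin_JZ] by simp
  fix i j assume i: "i < NN" and j: "j < NN"
  note ti = tau_props[OF i] and tj = tau_props[OF j]
  show "A (JZ (e i)) (e j) = A (e i) (JZ (e j))"
    using T3[OF dec(3)[OF i] dec(3)[OF j], where p="pp i" and a="aa i" and p'="pp j" and a'="aa j"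
        and \<alpha>=\<alpha> and \<beta>=\<beta>]
    by (simp add: JZ_e i j bilinear_lmul[OF bilA] bilinear_rmul[OF bilA] gramA ti tj sig_def)
qed

lemma JZ_P: "P (JZ u) = JZ (P u)"
proof -
  have "B (P (JZ u) - JZ (P u)) v = 0" for v
  proof -
    have "B (P (JZ u) - JZ (P u)) v = B (P (JZ u)) v - B (JZ (P u)) v" by (rule bilinear_lsub[OF bilB])
    also have "\<dots> = A (JZ u) v - B (P u) (JZ v)" using PA JZ_selfadj_B by simp
    also have "\<dots> = 0" using PA JZ_selfadj_A by simp
    finally show ?thesis .
  qed
  then have "P (JZ u) - JZ (P u) = 0" using nondegB by blast
  then show ?thesis by simp
qed

lemma lin_Mf: "linear Mf"
  unfolding Mf_def[abs_def] using linP by (intro lin_scale lin_sub lin_id) (auto intro: lin_scale lin_id)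

lemma JZ_Mf: "JZ (Mf x) = Mf (JZ x)"
  unfolding Mf_def using JZ_P by (simp add: linear_diff[OF lin_JZ] linear_scale[OF lin_JZ])


section \<open>Nilpotency of Mf - JZ\<close>

definition NZ :: "'v \<Rightarrow> 'v" where "NZ x = Mf x - JZ x"
definition VV :: "nat \<Rightarrow> 'v set" where "VV c = span (e ` {i. i < NN \<and> lev i < c})"

lemma lin_NZ: "linear NZ" unfolding NZ_def[abs_def] by (rule lin_sub[OF lin_Mf lin_JZ])

lemma B_Mf: "B (Mf u) v = (1 / \<beta>) * (A u v - \<alpha> * B u v)"
  unfolding Mf_def using PA
  by (simp add: bilinear_lmul[OF bilB] bilinear_lsub[OF bilB])

lemma coord_NZ:
  assumes i: "i < NN" and l: "l < NN" and ne: "coord i (NZ (e l)) \<noteq> 0"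
  shows "lev i < lev l"
proof -
  define j where "j = rho i"
  note rj = rho_props[OF i, folded j_def]
  note tl = tau_props[OF l]
  have val: "B (NZ (e l)) (e j) = (1 / \<beta>) * (A (e l) (e j) - \<alpha> * B (e l) (e j)) - sig l * B (e (tau l)) (e j)"
    unfolding NZ_def by (simp add: bilinear_lsub[OF bilB] B_Mf JZ_e l bilinear_lmul[OF bilB])
  have bne: "B (NZ (e l)) (e j) \<noteq> 0" using ne unfolding coord_def j_def by auto
  have o: "off l = off j"
  proof (rule ccontr)
    assume "off l \<noteq> off j"
    then show False using bne val gramA[OF l rj(1)] gramB[OF l rj(1)] gramB[OF tl(1) rj(1)] tl by simp
  qed
  have s: "sz j = sz l" using off_sz[OF l rj(1) o] by simp
  have "(1 / \<beta>) * (gA \<alpha> \<beta> (pp l) (aa l) (rr l) (pp j) (aa j) (rr j) - \<alpha> * gB (pp l) (aa l) (rr l) (pp j) (aa j) (rr j))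
      - sg (pp l) (rr l) * gB (pp l) (aa l) (1 - rr l) (pp j) (aa j) (rr j) \<noteq> 0"
    using bne val gramA[OF l rj(1)] gramB[OF l rj(1)] gramB[OF tl(1) rj(1)] tl o
    unfolding sig_def by simp
  from T5[OF dec(2)[OF l] _ dec(3)[OF l] dec(3)[OF rj(1)] beta this] dec(2)[OF rj(1)] s
  have "lv (sz l) (\<not> pp j) (aa j) < lv (sz l) (pp l) (aa l)" by simp
  moreover have "sz i = sz l" using rj s by simp
  ultimately show ?thesis unfolding lev_def using rj by simp
qed

lemma NZ_e_V: assumes l: "l < NN" shows "NZ (e l) \<in> VV (lev l)"
proof -
  have "NZ (e l) = (\<Sum>i<NN. coord i (NZ (e l)) *\<^sub>R e i)" by (rule expansion)
  also have "\<dots> \<in> VV (lev l)" unfolding VV_def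
  proof (rule span_sum)
    fix i assume "i \<in> {..<NN}"
    then have i: "i < NN" by simp
    show "coord i (NZ (e l)) *\<^sub>R e i \<in> span (e ` {i. i < NN \<and> lev i < lev l})"
    proof (cases "coord i (NZ (e l)) = 0")
      case True then show ?thesis by (simp add: span_zero)
    next
      case False
      then have "lev i < lev l" by (rule coord_NZ[OF i l])
      then have "e i \<in> span (e ` {i. i < NN \<and> lev i < lev l})" using i by (intro span_base) auto
      then show ?thesis by (rule span_scale)
    qed
  qed
  finally show ?thesis .
qed

lemma NZ_step: assumes x: "x \<in> VV (Suc c)" shows "NZ x \<in> VV c"
proof -
  have "span (e ` {i. i < NN \<and> lev i < Suc c}) \<subseteq> NZ -` VV c"
  proof (rule span_minimal)
    show "e ` {i. i < NN \<and> lev i < Suc c} \<subseteq> NZ -` VV c"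
    proof
      fix y assume "y \<in> e ` {i. i < NN \<and> lev i < Suc c}"
      then obtain l where l: "l < NN" "lev l < Suc c" and y: "y = e l" by auto
      have "VV (lev l) \<subseteq> VV c" unfolding VV_def using l by (intro span_mono) auto
      then show "y \<in> NZ -` VV c" using NZ_e_V[OF l(1)] y by auto
    qed
    show "subspace (NZ -` VV c)" unfolding VV_def
      by (rule linear_subspace_vimage[OF lin_NZ]) simp
  qed
  then show ?thesis using x unfolding VV_def by auto
qed

lemma lev_lt: "i < NN \<Longrightarrow> lev i < NN"
proof -
  assume i: "i < NN"
  have "lev i < sz i" unfolding lev_def lv_def using dec(2,4)[OF i] by auto
  moreover have "sz i \<le> NN" using boff_props[OF i] unfolding sz_def by auto
  ultimately show ?thesis by simp
qed

lemma NZ_nil: "(NZ ^^ NN) x = 0"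
proof -
  have "(NZ ^^ c) x \<in> VV (NN - c)" if "c \<le> NN" for c
    using that
  proof (induction c)
    case 0
    have "e ` {..<NN} \<subseteq> e ` {i. i < NN \<and> lev i < NN}" using lev_lt by auto
    then have "span (e ` {..<NN}) \<subseteq> VV NN" unfolding VV_def by (rule span_mono)
    then show ?case using spanE by auto
  next
    case (Suc c)
    then have "(NZ ^^ c) x \<in> VV (Suc (NN - Suc c))" by (simp add: Suc_diff_Suc)
    then show ?case by (simp add: NZ_step)
  qed
  from this[of NN] have "(NZ ^^ NN) x \<in> VV 0" by simp
  then show ?thesis unfolding VV_def by simp
qed

section \<open>Two automorphisms\<close>

definition Q2 :: "'v \<Rightarrow> 'v" where "Q2 = lmap (\<lambda>i. (if pp i then 1/2 else 2) *\<^sub>R e i)"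
definition Q2' :: "'v \<Rightarrow> 'v" where "Q2' = lmap (\<lambda>i. (if pp i then 2 else 1/2) *\<^sub>R e i)"
definition SG :: "'v \<Rightarrow> 'v" where "SG = lmap (\<lambda>i. (if pp i then -1 else 1) *\<^sub>R e i)"
definition QI :: "'v \<Rightarrow> 'v" where "QI x = JZ (SG x)"

lemma lin_Q2: "linear Q2" unfolding Q2_def using lin_lmap by blast
lemma lin_Q2': "linear Q2'" unfolding Q2'_def using lin_lmap by blast
lemma lin_SG: "linear SG" unfolding SG_def using lin_lmap by blast
lemma lin_QI: "linear QI" unfolding QI_def[abs_def] by (rule lin_comp[OF lin_JZ lin_SG])

lemma Q2_e: "i < NN \<Longrightarrow> Q2 (e i) = (if pp i then 1/2 else 2) *\<^sub>R e i"
  unfolding Q2_def by (rule lmap_e)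
lemma Q2'_e: "i < NN \<Longrightarrow> Q2' (e i) = (if pp i then 2 else 1/2) *\<^sub>R e i"
  unfolding Q2'_def by (rule lmap_e)
lemma SG_e: "i < NN \<Longrightarrow> SG (e i) = (if pp i then -1 else 1) *\<^sub>R e i"
  unfolding SG_def by (rule lmap_e)

lemma bij_inv: "(\<And>x. f (g x) = x) \<Longrightarrow> (\<And>x. g (f x) = x) \<Longrightarrow> bij f"
  by (metis bijI injI surjI)

lemma Q2_aut: "Q2 \<in> aut_real A B"
proof -
  have a: "Q2 (Q2' x) = x" for x
    by (rule lin_eq[OF lin_comp[OF lin_Q2 lin_Q2'] lin_id])
       (simp add: Q2_e Q2'_e linear_scale[OF lin_Q2])
  have b: "Q2' (Q2 x) = x" for x
    by (rule lin_eq[OF lin_comp[OF lin_Q2' lin_Q2] lin_id])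
       (simp add: Q2_e Q2'_e linear_scale[OF lin_Q2'])
  have cA: "A (Q2 x) (Q2 y) = A x y" for x y
  proof (rule bil_eq[OF bil_comp[OF bilA lin_Q2 lin_Q2] bilA'])
    fix i j assume i: "i < NN" and j: "j < NN"
    show "A (Q2 (e i)) (Q2 (e j)) = A (e i) (e j)"
      using T4(1)[of \<alpha> \<beta> "pp i" "aa i" "rr i" "pp j" "aa j" "rr j"]
      by (cases "pp i"; cases "pp j")
         (auto simp: Q2_e i j bilinear_lmul[OF bilA] bilinear_rmul[OF bilA] gramA)
  qed
  have cB: "B (Q2 x) (Q2 y) = B x y" for x y
  proof (rule bil_eq[OF bil_comp[OF bilB lin_Q2 lin_Q2] bilB'])
    fix i j assume i: "i < NN" and j: "j < NN"
    show "B (Q2 (e i)) (Q2 (e j)) = B (e i) (e j)"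
      using T4(2)[of "pp i" "aa i" "rr i" "pp j" "aa j" "rr j"]
      by (cases "pp i"; cases "pp j")
         (auto simp: Q2_e i j bilinear_lmul[OF bilB] bilinear_rmul[OF bilB] gramB)
  qed
  show ?thesis unfolding aut_real_def using lin_Q2 bij_inv[of Q2 Q2', OF a b] cA cB by blast
qed

lemma SG_A: "A (SG x) (SG y) = - A x y"
proof (rule bil_eq[OF bil_comp[OF bilA lin_SG lin_SG], of "\<lambda>x y. - A x y"])
  show "bilinear (\<lambda>x y. - A x y)" using bilA unfolding bilinear_def by (auto intro: lin_neg)
  fix i j assume i: "i < NN" and j: "j < NN"
  show "A (SG (e i)) (SG (e j)) = - A (e i) (e j)"
    using T4(1)[of \<alpha> \<beta> "pp i" "aa i" "rr i" "pp j" "aa j" "rr j"]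
    by (cases "pp i"; cases "pp j")
       (auto simp: SG_e i j bilinear_lmul[OF bilA] bilinear_rmul[OF bilA] gramA
         bilinear_lneg[OF bilA] bilinear_rneg[OF bilA])
qed

lemma SG_B: "B (SG x) (SG y) = - B x y"
proof (rule bil_eq[OF bil_comp[OF bilB lin_SG lin_SG], of "\<lambda>x y. - B x y"])
  show "bilinear (\<lambda>x y. - B x y)" using bilB unfolding bilinear_def by (auto intro: lin_neg)
  fix i j assume i: "i < NN" and j: "j < NN"
  show "B (SG (e i)) (SG (e j)) = - B (e i) (e j)"
    using T4(2)[of "pp i" "aa i" "rr i" "pp j" "aa j" "rr j"]
    by (cases "pp i"; cases "pp j")
       (auto simp: SG_e i j bilinear_lmul[OF bilB] bilinear_rmul[OF bilB] gramB
         bilinear_lneg[OF bilB] bilinear_rneg[OF bilB])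
qed

lemma QI_QI: "QI (QI x) = - x"
proof (rule lin_eq[OF lin_comp[OF lin_QI lin_QI] lin_neg[OF lin_id]])
  fix i assume i: "i < NN"
  note t = tau_props[OF i]
  show "QI (QI (e i)) = - e i"
    unfolding QI_def
    by (simp add: SG_e JZ_e i t linear_scale[OF lin_SG] linear_scale[OF lin_JZ] sig_tau tau_tau sig_sq)
qed

lemma QI_aut: "QI \<in> aut_real A B"
proof -
  have a: "QI (- QI x) = x" for x using QI_QI[of x] by (simp add: linear_neg[OF lin_QI])
  have b: "- QI (QI x) = x" for x using QI_QI[of x] by simp
  have cA: "A (QI x) (QI y) = A x y" for x y
    unfolding QI_def using JZ_selfadj_A[of "SG x" "JZ (SG y)"] JZJZ SG_A
    by (simp add: bilinear_rneg[OF bilA])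
  have cB: "B (QI x) (QI y) = B x y" for x y
    unfolding QI_def using JZ_selfadj_B[of "SG x" "JZ (SG y)"] JZJZ SG_B
    by (simp add: bilinear_rneg[OF bilB])
  show ?thesis unfolding aut_real_def using lin_QI bij_inv[of QI "\<lambda>x. - QI x", OF a b] cA cB by blast
qed

lemma JZ_QI: "JZ u = QI ((4/3) *\<^sub>R Q2 u - (5/3) *\<^sub>R u)"
proof -
  have "SG ((4/3) *\<^sub>R Q2 u - (5/3) *\<^sub>R u) = u"
  proof (rule lin_eq[of "\<lambda>u. SG ((4/3) *\<^sub>R Q2 u - (5/3) *\<^sub>R u)" "\<lambda>u. u"])
    show "linear (\<lambda>u. SG ((4/3) *\<^sub>R Q2 u - (5/3) *\<^sub>R u))"
      by (rule lin_comp[OF lin_SG lin_sub[OF lin_scale[OF lin_Q2] lin_scale[OF lin_id]]])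
    show "linear (\<lambda>u::'v. u)" by (rule lin_id)
    fix i assume i: "i < NN"
    show "SG ((4/3) *\<^sub>R Q2 (e i) - (5/3) *\<^sub>R e i) = e i"
      by (cases "pp i") (simp_all add: Q2_e SG_e i linear_diff[OF lin_SG] linear_scale[OF lin_SG] linear_neg[OF lin_SG]
          scaleR_diff_left[symmetric])
  qed
  then show ?thesis unfolding QI_def by simp
qed

end

lemma concrete2:
  fixes A B :: "'v::euclidean_space \<Rightarrow> 'v \<Rightarrow> real"
    and P :: "'v \<Rightarrow> 'v"
  assumes bilA: "bilinear A" and bilB: "bilinear B"
    and nondegB: "\<forall>u. (\<forall>v. B u v = 0) \<longrightarrow> u = 0"
    and beta: "\<beta> \<noteq> 0"
    and blocks: "only_real_jordan_blocks A B \<alpha> \<beta>"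
    and P: "linear P" "\<forall>u v. A u v = B (P u) v"
  shows "\<exists>J0 Q2 Qi. linear J0 \<and> (\<forall>x. J0 (J0 x) = - x)
     \<and> (\<forall>x. J0 ((1 / \<beta>) *\<^sub>R (P x - \<alpha> *\<^sub>R x)) = (1 / \<beta>) *\<^sub>R (P (J0 x) - \<alpha> *\<^sub>R J0 x))
     \<and> (\<exists>k. \<forall>x. ((\<lambda>x. (1 / \<beta>) *\<^sub>R (P x - \<alpha> *\<^sub>R x) - J0 x) ^^ k) x = 0)
     \<and> Q2 \<in> aut_real A B \<and> Qi \<in> aut_real A B
     \<and> (\<forall>u. J0 u = Qi ((4/3) *\<^sub>R Q2 u - (5/3) *\<^sub>R u))"
proof -
  from blocks obtain ks and e :: "nat \<Rightarrow> 'v" where kpos: "\<forall>k\<in>set ks. 0 < k"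
    and inj: "inj_on e {..<4 * sum_list ks}"
    and sp: "span (e ` {..<4 * sum_list ks}) = UNIV"
    and gr: "\<forall>i<4 * sum_list ks. \<forall>j<4 * sum_list ks.
        A (e i) (e j) = blockdiag (jblock_A \<alpha> \<beta>) ks i j \<and> B (e i) (e j) = blockdiag jblock_B ks i j"
    unfolding only_real_jordan_blocks_def Let_def by blast
  interpret jb A B P \<alpha> \<beta> ks e
    by (rule jb.intro[OF bilA bilB nondegB beta P(1) P(2) kpos inj sp gr])
  have nz: "(\<lambda>x. (1 / \<beta>) *\<^sub>R (P x - \<alpha> *\<^sub>R x) - JZ x) = NZ"
    by (simp add: fun_eq_iff NZ_def Mf_def)
  show ?thesis
  proof (rule exI[of _ JZ], rule exI[of _ Q2], rule exI[of _ QI], intro conjI allI)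
    show "linear JZ" by (rule lin_JZ)
    show "JZ (JZ x) = - x" for x by (rule JZJZ)
    show "JZ ((1 / \<beta>) *\<^sub>R (P x - \<alpha> *\<^sub>R x)) = (1 / \<beta>) *\<^sub>R (P (JZ x) - \<alpha> *\<^sub>R JZ x)" for x
      using JZ_Mf[of x] unfolding Mf_def .
    show "\<exists>k. \<forall>x. ((\<lambda>x. (1 / \<beta>) *\<^sub>R (P x - \<alpha> *\<^sub>R x) - JZ x) ^^ k) x = 0"
      unfolding nz using NZ_nil by blast
    show "Q2 \<in> aut_real A B" by (rule Q2_aut)
    show "QI \<in> aut_real A B" by (rule QI_aut)
    show "JZ u = QI ((4/3) *\<^sub>R Q2 u - (5/3) *\<^sub>R u)" for u by (rule JZ_QI)
  qed
qed

theorem theorem9: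
  fixes A B :: "'v::euclidean_space \<Rightarrow> 'v \<Rightarrow> real"
    and P J :: "'v \<Rightarrow> 'v"
    and \<alpha> \<beta> :: real
  assumes bilA: "bilinear A" and bilB: "bilinear B"
    and skewA: "\<forall>u v. A u v = - A v u"
    and skewB: "\<forall>u v. B u v = - B v u"
    and nondegB: "\<forall>u. (\<forall>v. B u v = 0) \<longrightarrow> u = 0"
    and beta: "\<beta> \<noteq> 0"
    and blocks: "only_real_jordan_blocks A B \<alpha> \<beta>"
    and P: "linear P" "\<forall>u v. A u v = B (P u) v"
    and J: "is_semisimple_part J (\<lambda>x. (1 / \<beta>) *\<^sub>R (P x - \<alpha> *\<^sub>R x))"
  shows "(\<forall>Q\<in>aut_real A B. Q \<circ> J = J \<circ> Q)
       \<and> aut_real A B = aut_complex J A B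
       \<and> (\<forall>U. subspace U \<longrightarrow>
             (invariant_under (aut_real A B) U \<longleftrightarrow>
                (J ` U \<subseteq> U \<and> invariant_under (aut_complex J A B) U)))"
proof -
  define Mf where "Mf = (\<lambda>x. (1 / \<beta>) *\<^sub>R (P x - \<alpha> *\<^sub>R x))"
  have linM: "linear Mf" unfolding Mf_def using P(1)
    by (intro lin_scale lin_sub lin_id) (auto intro: lin_scale lin_id)
  obtain J0 Q2 Qi where lJ0: "linear J0" and J0J0: "\<forall>x. J0 (J0 x) = - x"
    and J0M: "\<forall>x. J0 (Mf x) = Mf (J0 x)"
    and nilJ0: "\<exists>k. \<forall>x. ((\<lambda>x. Mf x - J0 x) ^^ k) x = 0"
    and Q2: "Q2 \<in> aut_real A B" and Qi: "Qi \<in> aut_real A B"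
    and J0Q: "\<forall>u. J0 u = Qi ((4/3) *\<^sub>R Q2 u - (5/3) *\<^sub>R u)"
    using concrete2[OF bilA bilB nondegB beta blocks P] unfolding Mf_def by blast
  define m where "m = Lop Mf"
  define j0 where "j0 = Lop J0"
  have am: "app m = Mf" unfolding m_def using linM by simp
  have aj0: "app j0 = J0" unfolding j0_def using lJ0 by simp
  have j0j0: "j0 * j0 = -1" by (rule lop_eqI) (simp add: aj0 J0J0)
  have j0m: "j0 * m = m * j0" by (rule lop_eqI) (simp add: aj0 am J0M)
  obtain k0 where k0: "\<forall>x. ((\<lambda>x. Mf x - J0 x) ^^ k0) x = 0" using nilJ0 by blast
  have amj0: "app (m - j0) = (\<lambda>x. Mf x - J0 x)" by (simp add: fun_eq_iff am aj0)
  have nj0: "(m - j0) ^ k0 = 0" by (rule lop_eqI) (simp add: app_power amj0 k0)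
  have K: "(m * m + 1) ^ k0 = 0" by (rule sq_nil[OF j0j0 j0m nj0])
  obtain s where scomm: "\<forall>x. x * m = m * x \<longrightarrow> x * s = s * x"
    and suniq: "\<forall>x l. x * x = -1 \<and> x * m = m * x \<and> (m - x) ^ l = 0 \<longrightarrow> x = s"
    using core_unique[OF K] by blast
  have j0s: "j0 = s" using suniq j0j0 j0m nj0 by blast
  from J obtain N where lJ: "linear J" and lN: "linear N" and ssJ: "semisimple_op J"
    and nN: "nilpotent_op N" and JN: "J \<circ> N = N \<circ> J"
    and MJN: "\<forall>x. Mf x = J x + N x"
    unfolding is_semisimple_part_def Mf_def by blast
  define j where "j = Lop J"
  define n where "n = Lop N"
  have aj: "app j = J" unfolding j_def using lJ by simp
  have an: "app n = N" unfolding n_def using lN by simp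
  have mjn: "m = j + n" by (rule lop_eqI) (simp add: am aj an MJN)
  have jn: "j * n = n * j" by (rule lop_eqI) (simp add: aj an JN[unfolded fun_eq_iff o_def, rule_format])
  obtain kn where kn: "\<forall>x. (N ^^ kn) x = 0" using nN unfolding nilpotent_op_def by blast
  have nn: "n ^ kn = 0" by (rule lop_eqI) (simp add: app_power an kn)
  have jm: "j * m = m * j" unfolding mjn using jn by (simp add: algebra_simps)
  have mj: "m - j = n" unfolding mjn by simp
  obtain p where p0: "p \<noteq> 0" and pJ: "\<forall>x. poly_op p J x = 0"
    and simple: "\<forall>z :: complex. poly (map_poly of_real p) z = 0 \<longrightarrow>
                        poly (pderiv (map_poly of_real p)) z \<noteq> 0"
    using ssJ unfolding semisimple_op_def by blast
  have pj: "peval p j = 0" by (rule lop_eqI) (simp add: app_peval aj pJ)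
  have "(j * j + 1) ^ (k0 + kn) = 0" by (rule nil_sq[OF jm K]) (simp add: mj nn)
  then have jj: "j * j = -1" by (rule semisimple_sq[OF pj p0 simple])
  have js: "j = s" using suniq jj jm mj nn by blast
  have JJ0: "J = J0" using aj aj0 js j0s by simp
  have QJ: "Q (J x) = J (Q x)" if Q: "Q \<in> aut_real A B" for Q x
  proof -
    have lQ: "linear Q" using Q by (simp add: aut_real_def)
    define q where "q = Lop Q"
    have aq: "app q = Q" unfolding q_def using lQ by simp
    have "P (Q u) = Q (P u)" for u by (rule aut_comm_P[OF bilB nondegB P(2) Q])
    then have "Mf (Q u) = Q (Mf u)" for u unfolding Mf_def
      using lQ by (simp add: linear_diff linear_scale)
    then have "q * m = m * q" by (intro lop_eqI) (simp add: aq am)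
    then have "q * s = s * q" using scomm by blast
    then have "q * j = j * q" using js by simp
    then have "app (q * j) x = app (j * q) x" by simp
    then show ?thesis by (simp add: aq aj)
  qed
  have c1: "\<forall>Q\<in>aut_real A B. Q \<circ> J = J \<circ> Q" using QJ by (auto simp: fun_eq_iff)
  have c2: "aut_real A B = aut_complex J A B"
  proof
    show "aut_real A B \<subseteq> aut_complex J A B"
    proof
      fix Q assume Q: "Q \<in> aut_real A B"
      then have lQ: "linear Q" and bQ: "bij Q" and QA: "\<forall>u v. A (Q u) (Q v) = A u v"
        and QB: "\<forall>u v. B (Q u) (Q v) = B u v" by (auto simp: aut_real_def)
      have cl: "complex_linear_J J Q"
        unfolding complex_linear_J_def cscale_def using lQ QJ[OF Q]
        by (simp add: linear_iff)
      show "Q \<in> aut_complex J A B" unfolding aut_complex_def cform_def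
        using cl bQ QA QB QJ[OF Q] by (simp add: QJ[OF Q, symmetric])
    qed
  next
    show "aut_complex J A B \<subseteq> aut_real A B"
    proof
      fix Q assume Q: "Q \<in> aut_complex J A B"
      then have cl: "complex_linear_J J Q" and bQ: "bij Q"
        and QA: "\<forall>u v. cform J A (Q u) (Q v) = cform J A u v"
        and QB: "\<forall>u v. cform J B (Q u) (Q v) = cform J B u v" by (auto simp: aut_complex_def)
      have sc: "cscale J (complex_of_real c) v = c *\<^sub>R v" for c v by (simp add: cscale_def)
      have lQ: "linear Q" unfolding linear_iff
      proof (intro conjI allI)
        show "Q (x + y) = Q x + Q y" for x y using cl by (simp add: complex_linear_J_def)
        show "Q (c *\<^sub>R x) = c *\<^sub>R Q x" for c x
          using cl unfolding complex_linear_J_def by (metis sc)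
      qed
      have "A (Q u) (Q v) = A u v" for u v
        using QA[rule_format, of u v] by (simp add: cform_def)
      moreover have "B (Q u) (Q v) = B u v" for u v
        using QB[rule_format, of u v] by (simp add: cform_def)
      ultimately show "Q \<in> aut_real A B" unfolding aut_real_def using lQ bQ by blast
    qed
  qed
  have c3: "invariant_under (aut_real A B) U \<longleftrightarrow>
                (J ` U \<subseteq> U \<and> invariant_under (aut_complex J A B) U)" if U: "subspace U" for U
  proof
    assume inv: "invariant_under (aut_real A B) U"
    have "J u \<in> U" if u: "u \<in> U" for u
    proof -
      have "Q2 u \<in> U" using inv Q2 u unfolding invariant_under_def by blast
      then have "(4/3) *\<^sub>R Q2 u - (5/3) *\<^sub>R u \<in> U"
        using U u by (intro subspace_diff subspace_scale) auto
      then have "Qi ((4/3) *\<^sub>R Q2 u - (5/3) *\<^sub>R u) \<in> U"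
        using inv Qi unfolding invariant_under_def by blast
      then show ?thesis using J0Q JJ0 by simp
    qed
    then show "J ` U \<subseteq> U \<and> invariant_under (aut_complex J A B) U"
      using inv c2 by auto
  next
    assume "J ` U \<subseteq> U \<and> invariant_under (aut_complex J A B) U"
    then show "invariant_under (aut_real A B) U" using c2 by simp
  qed
  show ?thesis using c1 c2 c3 by blast
qed

end
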